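(* Consider the storage arbitrage model and the optimal-sizing equation described in the context. Let $H_1,\dots,H_m$ be all the local maximal prices and $L_1,\dots,L_m$ all the local minimal prices of the ToU scheme. Then the equation $$\pi_s=\sum_{i=1}^n MR_i(C)$$ in the unknown capacity $C$ admits a unique solution if and only if $$\pi_s\le \pi_{\max}=\sum_{i=1}^m (H_i-L_i).$$
   Context: Time-of-Use (ToU) setting: a day is divided into periods $1,\dots,n$ with electricity price $\pi_i$ in period $i$, and $\pi_n=\min_i \pi_i$. A price $\pi_i$ is a local maximal (minimal) price if it is higher (lower) than the prices of the adjacent periods. The user has random demand $X_i$ in period $i$; the $X_i$ are independent, inelastic, and $X_i$ has a continuously differentiable density $f_i$ with $f_i(x)>0$ iff $x\ge 0$. The user invests in a lossless, perfectly efficient storage of capacity $C$, whose amortized marginal cost per unit capacity is $\pi_s$. With $r_i$ the energy stored at the end of period $i$, $r_0=r_n=C$, the user's purchase in period $i$ is $u_i=r_i+X_i-r_{i-1}\ge 0$ and the expected total cost is $J=\mathbb{E}\big[\sum_{i=1}^n\pi_i(r_i+X_i-r_{i-1})\big]$. Under a virtual-reservation policy $M_1,\dots,M_n$, at the end of period $i$ the user keeps at least $\min\{M_i,C\}$ in storage, i.e. $r_i=\max\{\min\{M_i,C\},r_{i-1}-X_i\}$; the last period fully charges the storage. $J_i(M_i)$ is the expected cost over periods $i+1,\dots,n$ when reserving $M_i$ at the end of period $i$ and the optimal reservations $M_{i+1}^*,\dots,M_n^*$ afterward. The optimal virtual reservations $M_i^*$ are computed backward: $M_i^*=0$ if $\pi_i\ge\pi_{i+1}$,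 and otherwise $M_i^*$ solves $\pi_i=-\frac{\mathrm{d}J_i}{\mathrm{d}M_i}$ (computed as if capacity were unconstrained). The marginal revenue of capacity in period $i$ is $MR_i(C)=0$ if $M_i^*\le C$, and $MR_i(C)=-\frac{\mathrm{d}J_i}{\mathrm{d}M_i}\big|_{M_i=C}-\pi_i$ otherwise. *)

theory Defs
  imports "HOL-Probability.Probability"
begin

text \<open>Periods are 1..n, treated cyclically (the day repeats): the period after n is 1,
  the period before 1 is n.\<close>

definition nxt :: "nat \<Rightarrow> nat \<Rightarrow> nat" where
  "nxt n k = (if k = n then 1 else k + 1)"

definition prv :: "nat \<Rightarrow> nat \<Rightarrow> nat" where
  "prv n k = (if k = 1 then n else k - 1)"

definition is_local_max :: "(nat \<Rightarrow> real) \<Rightarrow> nat \<Rightarrow> nat \<Rightarrow> bool" where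
  "is_local_max p n k \<longleftrightarrow> p k > p (prv n k) \<and> p k > p (nxt n k)"

definition is_local_min :: "(nat \<Rightarrow> real) \<Rightarrow> nat \<Rightarrow> nat \<Rightarrow> bool" where
  "is_local_min p n k \<longleftrightarrow> p k < p (prv n k) \<and> p k < p (nxt n k)"

definition pi_max :: "(nat \<Rightarrow> real) \<Rightarrow> nat \<Rightarrow> real" where
  "pi_max p n = (\<Sum>k | k \<in> {1..n} \<and> is_local_max p n k. p k)
              - (\<Sum>k | k \<in> {1..n} \<and> is_local_min p n k. p k)"

text \<open>Storage level at index i+j when the level at the end of period i is M and the
  (effective) reservations are a: r_k = max(a_k, r_(k-1) - X_k).\<close>
fun state :: "(nat \<Rightarrow> real) \<Rightarrow> (nat \<Rightarrow> 'a \<Rightarrow> real) \<Rightarrow> nat \<Rightarrow> real \<Rightarrow> nat \<Rightarrow> 'a \<Rightarrow> real" where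
  "state a X i M 0 \<omega> = M"
| "state a X i M (Suc j) \<omega> = max (a (i + Suc j)) (state a X i M j \<omega> - X (i + Suc j) \<omega>)"

text \<open>Level at the end of period k (k \<ge> i); the last period n fully charges to C.\<close>
definition level :: "(nat \<Rightarrow> real) \<Rightarrow> (nat \<Rightarrow> 'a \<Rightarrow> real) \<Rightarrow> nat \<Rightarrow> real \<Rightarrow> nat \<Rightarrow> real \<Rightarrow> nat \<Rightarrow> 'a \<Rightarrow> real" where
  "level a X n C i M k \<omega> = (if k = n then C else state a X i M (k - i) \<omega>)"

definition cost :: "(nat \<Rightarrow> real) \<Rightarrow> (nat \<Rightarrow> real) \<Rightarrow> (nat \<Rightarrow> 'a \<Rightarrow> real) \<Rightarrow> nat \<Rightarrow> real \<Rightarrow> nat \<Rightarrow> real \<Rightarrow> 'a \<Rightarrow> real" where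
  "cost p a X n C i M \<omega> =
     (\<Sum>k\<in>{i+1..n}. p k * (level a X n C i M k \<omega> + X k \<omega> - level a X n C i M (k - 1) \<omega>))"

text \<open>Effective reservation min(M_k, C) (virtual reservations may be +\<infinity>).\<close>
definition eff_res :: "real \<Rightarrow> (nat \<Rightarrow> ereal) \<Rightarrow> nat \<Rightarrow> real" where
  "eff_res C ms k = real_of_ereal (min (ms k) (ereal C))"

definition Jfrom :: "'a measure \<Rightarrow> (nat \<Rightarrow> 'a \<Rightarrow> real) \<Rightarrow> (nat \<Rightarrow> real) \<Rightarrow> nat \<Rightarrow> real
                     \<Rightarrow> (nat \<Rightarrow> ereal) \<Rightarrow> nat \<Rightarrow> real \<Rightarrow> real" where
  "Jfrom P X p n C ms i M = integral\<^sup>L P (cost p (eff_res C ms) X n C i M)"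

text \<open>For period n, the future periods are those of the next day, 1..n (start index 0).\<close>
definition start_idx :: "nat \<Rightarrow> nat \<Rightarrow> nat" where
  "start_idx n i = (if i = n then 0 else i)"

text \<open>Optimal virtual reservation of period i given later ones: 0 if p_i \<ge> p_(i+1),
  otherwise the (least) solution M \<ge> 0 of p_i = - dJ_i/dM (+\<infinity> if there is none).\<close>
definition mstar_step :: "'a measure \<Rightarrow> (nat \<Rightarrow> 'a \<Rightarrow> real) \<Rightarrow> (nat \<Rightarrow> real) \<Rightarrow> nat \<Rightarrow> real
                          \<Rightarrow> (nat \<Rightarrow> ereal) \<Rightarrow> nat \<Rightarrow> ereal" where
  "mstar_step P X p n C ms i =
     (if p i \<ge> p (nxt n i) then 0
      else Inf {ereal M | M. M \<ge> 0 \<and> p i = - deriv (Jfrom P X p n C ms (start_idx n i)) M})"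

fun mvec :: "'a measure \<Rightarrow> (nat \<Rightarrow> 'a \<Rightarrow> real) \<Rightarrow> (nat \<Rightarrow> real) \<Rightarrow> nat \<Rightarrow> real \<Rightarrow> nat \<Rightarrow> nat \<Rightarrow> ereal" where
  "mvec P X p n C 0 = (\<lambda>_. 0)"
| "mvec P X p n C (Suc d) =
     (let ms = mvec P X p n C d in ms(n - Suc d := mstar_step P X p n C ms (n - Suc d)))"

definition opt_res :: "'a measure \<Rightarrow> (nat \<Rightarrow> 'a \<Rightarrow> real) \<Rightarrow> (nat \<Rightarrow> real) \<Rightarrow> nat \<Rightarrow> real \<Rightarrow> nat \<Rightarrow> ereal" where
  "opt_res P X p n C = mvec P X p n C (n - 1)"

definition Mstar :: "'a measure \<Rightarrow> (nat \<Rightarrow> 'a \<Rightarrow> real) \<Rightarrow> (nat \<Rightarrow> real) \<Rightarrow> nat \<Rightarrow> real \<Rightarrow> nat \<Rightarrow> ereal" where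
  "Mstar P X p n C i =
     (if i = n then mstar_step P X p n C (opt_res P X p n C) n else opt_res P X p n C i)"

definition Jopt :: "'a measure \<Rightarrow> (nat \<Rightarrow> 'a \<Rightarrow> real) \<Rightarrow> (nat \<Rightarrow> real) \<Rightarrow> nat \<Rightarrow> real \<Rightarrow> nat \<Rightarrow> real \<Rightarrow> real" where
  "Jopt P X p n C i = Jfrom P X p n C (opt_res P X p n C) (start_idx n i)"

definition MR :: "'a measure \<Rightarrow> (nat \<Rightarrow> 'a \<Rightarrow> real) \<Rightarrow> (nat \<Rightarrow> real) \<Rightarrow> nat \<Rightarrow> real \<Rightarrow> nat \<Rightarrow> real" where
  "MR P X p n C i =
     (if Mstar P X p n C i \<le> ereal C then 0 else - deriv (Jopt P X p n C i) C - p i)"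

end

theory Submission
  imports Defs
begin

lemma state_shift:
  "state a X s M (Suc j) \<omega> = state a X (Suc s) (max (a (Suc s)) (M - X (Suc s) \<omega>)) j \<omega>"
  by (induction j) (auto simp: add.commute)

lemma level_shift:
  assumes "s < k"
  shows "level a X n C s M k \<omega> = level a X n C (Suc s) (max (a (Suc s)) (M - X (Suc s) \<omega>)) k \<omega>"
proof -
  have "k - s = Suc (k - Suc s)" using assms by simp
  then show ?thesis unfolding level_def by (simp only: state_shift)
qed

lemma cost_step:
  assumes "Suc s < n"
  shows "cost p a X n C s M \<omega> = p (Suc s) * (max (a (Suc s)) (M - X (Suc s) \<omega>) + X (Suc s) \<omega> - M)
     + cost p a X n C (Suc s) (max (a (Suc s)) (M - X (Suc s) \<omega>)) \<omega>"
proof -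
  let ?r = "max (a (Suc s)) (M - X (Suc s) \<omega>)"
  have split: "{s+1..n} = insert (Suc s) {Suc s + 1..n}" using assms by auto
  have "cost p a X n C s M \<omega> = p (Suc s) * (level a X n C s M (Suc s) \<omega> + X (Suc s) \<omega> - level a X n C s M s \<omega>)
     + (\<Sum>k\<in>{Suc s + 1..n}. p k * (level a X n C s M k \<omega> + X k \<omega> - level a X n C s M (k - 1) \<omega>))"
    unfolding cost_def split by (subst sum.insert) auto
  also have "level a X n C s M (Suc s) \<omega> = ?r" using assms by (simp add: level_def)
  also have "level a X n C s M s \<omega> = M" using assms by (simp add: level_def)
  also have "(\<Sum>k\<in>{Suc s + 1..n}. p k * (level a X n C s M k \<omega> + X k \<omega> - level a X n C s M (k - 1) \<omega>))
     = cost p a X n C (Suc s) ?r \<omega>"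
    unfolding cost_def
  proof (intro sum.cong refl)
    fix k assume k: "k \<in> {Suc s + 1..n}"
    then have "s < k" "s < k - 1" by auto
    then show "p k * (level a X n C s M k \<omega> + X k \<omega> - level a X n C s M (k - 1) \<omega>) =
         p k * (level a X n C (Suc s) ?r k \<omega> + X k \<omega> - level a X n C (Suc s) ?r (k - 1) \<omega>)"
    proof -
      have e1: "level a X n C s M k \<omega> = level a X n C (Suc s) ?r k \<omega>"
        by (rule level_shift) fact
      have e2: "level a X n C s M (k - 1) \<omega> = level a X n C (Suc s) ?r (k - 1) \<omega>"
        by (rule level_shift) fact
      show ?thesis by (simp only: e1 e2)
    qed
  qed
  finally show ?thesis .
qed

lemma cost_last:
  assumes "n \<ge> 1"
  shows "cost p a X n C (n - 1) M \<omega> = p n * (C + X n \<omega> - M)"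
proof -
  have e: "{n - 1 + 1..n} = {n}" using assms by auto
  show ?thesis unfolding cost_def e level_def using assms by auto
qed

lemma dct_at:
  fixes s :: "real \<Rightarrow> real \<Rightarrow> real" and \<mu> :: "real measure"
  assumes meas: "\<And>t. s t \<in> borel_measurable \<mu>" and w: "integrable \<mu> w"
    and g: "g \<in> borel_measurable \<mu>"
    and lim: "AE x in \<mu>. ((\<lambda>t. s t x) \<longlongrightarrow> g x) (at t0)"
    and bound: "\<And>t. AE x in \<mu>. norm (s t x) \<le> w x"
  shows "((\<lambda>t. \<integral>x. s t x \<partial>\<mu>) \<longlongrightarrow> (\<integral>x. g x \<partial>\<mu>)) (at t0)"
proof (subst tendsto_at_iff_sequentially, intro allI impI)
  fix Y :: "nat \<Rightarrow> real" assume Y: "\<forall>i. Y i \<in> UNIV - {t0}" "Y \<longlonglongrightarrow> t0"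
  then have YF: "filterlim Y (at t0) sequentially"
    by (auto simp: filterlim_at)
  show "((\<lambda>t. \<integral>x. s t x \<partial>\<mu>) \<circ> Y) \<longlonglongrightarrow> (\<integral>x. g x \<partial>\<mu>)"
    unfolding comp_def
  proof (rule integral_dominated_convergence[where w=w])
    show "AE x in \<mu>. (\<lambda>i. s (Y i) x) \<longlonglongrightarrow> g x"
      using lim by eventually_elim (rule filterlim_compose[OF _ YF])
  qed (use meas w g bound in auto)
qed

lemma deriv_integral:
  fixes \<phi> :: "real \<Rightarrow> real \<Rightarrow> real" and \<mu> :: "real measure"
  assumes fin: "finite_measure \<mu>"
    and int: "\<And>M. integrable \<mu> (\<phi> M)"
    and lip: "\<And>M M' x. \<bar>\<phi> M x - \<phi> M' x\<bar> \<le> L * \<bar>M - M'\<bar>"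
    and der: "AE x in \<mu>. ((\<lambda>M. \<phi> M x) has_real_derivative \<psi> x) (at M0)"
    and psi: "\<psi> \<in> borel_measurable \<mu>"
  shows "((\<lambda>M. \<integral>x. \<phi> M x \<partial>\<mu>) has_real_derivative (\<integral>x. \<psi> x \<partial>\<mu>)) (at M0)"
proof -
  interpret finite_measure \<mu> by fact
  have "((\<lambda>t. \<integral>x. (\<phi> t x - \<phi> M0 x) / (t - M0) \<partial>\<mu>) \<longlongrightarrow> (\<integral>x. \<psi> x \<partial>\<mu>)) (at M0)"
  proof (rule dct_at[where w="\<lambda>_. L"])
    show "(\<lambda>x. (\<phi> t x - \<phi> M0 x) / (t - M0)) \<in> borel_measurable \<mu>" for t
      using int[of t] int[of M0] by measurable
    show "AE x in \<mu>. ((\<lambda>t. (\<phi> t x - \<phi> M0 x) / (t - M0)) \<longlongrightarrow> \<psi> x) (at M0)"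
      using der by eventually_elim (simp add: has_field_derivative_iff)
    show "AE x in \<mu>. norm ((\<phi> t x - \<phi> M0 x) / (t - M0)) \<le> L" for t
    proof (rule AE_I2)
      fix x
      show "norm ((\<phi> t x - \<phi> M0 x) / (t - M0)) \<le> L"
      proof (cases "t = M0")
        case True
        have "0 \<le> L" using lip[where M=1 and M'=0 and x=x] by (simp add: order_trans[OF abs_ge_zero])
        then show ?thesis using True by simp
      next
        case False
        then have "\<bar>t - M0\<bar> > 0" by simp
        then show ?thesis using lip[where M=t and M'=M0 and x=x] by (simp add: abs_divide divide_le_eq)
      qed
    qed
  qed (use psi in auto)
  moreover have "(\<lambda>t. \<integral>x. (\<phi> t x - \<phi> M0 x) / (t - M0) \<partial>\<mu>) = (\<lambda>t. ((\<integral>x. \<phi> t x \<partial>\<mu>) - (\<integral>x. \<phi> M0 x \<partial>\<mu>)) / (t - M0))"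
    by (rule ext) (simp add: Bochner_Integration.integral_diff[OF int int])
  ultimately show ?thesis
    by (simp add: has_field_derivative_iff)
qed

lemma cont_integral_shift:
  fixes h :: "real \<Rightarrow> real" and \<mu> :: "real measure"
  assumes fin: "finite_measure \<mu>" and sets: "sets \<mu> = sets borel"
    and hm: "h \<in> borel_measurable borel" and hb: "\<And>y. \<bar>h y\<bar> \<le> K"
    and hc: "\<And>y. y \<noteq> b \<Longrightarrow> isCont h y"
    and single: "\<And>c. AE x in \<mu>. x \<noteq> c"
  shows "isCont (\<lambda>M. \<integral>x. h (M - x) \<partial>\<mu>) M0"
proof -
  interpret finite_measure \<mu> by fact
  have [measurable_cong]: "sets \<mu> = sets borel" by fact
  note [measurable] = hm
  show ?thesis unfolding isCont_def
  proof (rule dct_at[where w="\<lambda>_. K"])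
    show "AE x in \<mu>. ((\<lambda>t. h (t - x)) \<longlongrightarrow> h (M0 - x)) (at M0)"
      using single[of "M0 - b"]
    proof eventually_elim
      fix x assume "x \<noteq> M0 - b"
      then have "isCont h (M0 - x)" by (intro hc) auto
      then show "((\<lambda>t. h (t - x)) \<longlongrightarrow> h (M0 - x)) (at M0)"
        by (intro isCont_tendsto_compose[of _ h] tendsto_intros)
    qed
  qed (use hb in auto)
qed

lemma strict_shift:
  fixes h :: "real \<Rightarrow> real" and \<mu> :: "real measure"
  assumes fin: "finite_measure \<mu>" and sets: "sets \<mu> = sets borel"
    and hm: "h \<in> borel_measurable borel" and hb: "\<And>y. \<bar>h y\<bar> \<le> K"
    and pos: "AE x in \<mu>. 0 < x"
    and posI: "\<And>l u. 0 \<le> l \<Longrightarrow> l < u \<Longrightarrow> emeasure \<mu> {l<..<u} \<noteq> 0"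
    and mono: "\<And>y y'. y \<le> y' \<Longrightarrow> y' \<le> c \<Longrightarrow> h y' \<le> h y"
    and h0: "\<And>y. y \<le> 0 \<Longrightarrow> h y = q"
    and ac: "a < c"
    and eq: "(\<integral>x. h (a - x) \<partial>\<mu>) = (\<integral>x. h (c - x) \<partial>\<mu>)"
  shows "\<forall>y<c. h y = q"
proof (rule ccontr)
  interpret finite_measure \<mu> by fact
  have [measurable_cong]: "sets \<mu> = sets borel" by fact
  note [measurable] = hm
  assume "\<not> (\<forall>y<c. h y = q)"
  then obtain y0 where y0: "y0 < c" "h y0 \<noteq> q" by auto
  have hle: "h y \<le> q" if "y \<le> c" for y
  proof (cases "y \<le> 0")
    case True then show ?thesis using h0 by simp
  next
    case False then show ?thesis using mono[of 0 y] h0[of 0] that by simp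
  qed
  have y0q: "h y0 < q" using hle[of y0] y0 by simp
  have y0pos: "0 < y0" using y0 h0[of y0] by force
  define T where "T = {y. y < c \<and> h y = q}"
  define t where "t = Sup T"
  have T0: "0 \<in> T" using y0 y0pos h0[of 0] by (simp add: T_def)
  have Tb: "bdd_above T" unfolding T_def by (rule bdd_aboveI[of _ c]) auto
  have Tle: "y \<le> y0" if "y \<in> T" for y
  proof (rule ccontr)
    assume "\<not> y \<le> y0"
    then have "h y \<le> h y0" using mono[of y0 y] that by (simp add: T_def)
    then show False using that y0q by (simp add: T_def)
  qed
  have ty0: "t \<le> y0" unfolding t_def using T0 Tle by (intro cSup_least) auto
  have below: "h y = q" if "y < t" for y
  proof -
    have "\<exists>y'\<in>T. y < y'" using \<open>y < t\<close> T0 Tb less_cSup_iff[of T y] unfolding t_def by auto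
    then obtain y' where "y' \<in> T" "y < y'" by auto
    then have "h y' = q" "y' < c" by (auto simp: T_def)
    then have "q \<le> h y" using mono[of y y'] \<open>y < y'\<close> by simp
    moreover have "h y \<le> q" using hle[of y] \<open>y < y'\<close> \<open>y' < c\<close> by simp
    ultimately show ?thesis by simp
  qed
  have above: "h y < q" if "t < y" "y \<le> c" for y
  proof (cases "y < c")
    case True
    have "y \<notin> T" using that T0 Tb unfolding t_def using cSup_upper by force
    then show ?thesis using True hle[of y] that by (auto simp: T_def)
  next
    case False
    then have "y = c" using that by simp
    then show ?thesis using mono[of y0 c] y0 y0q by simp
  qed
  define I where "I = {max 0 (a - t) <..< c - t}"
  have Ipos: "emeasure \<mu> I \<noteq> 0" unfolding I_def
    using ac ty0 y0 by (intro posI) auto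
  have int_a: "integrable \<mu> (\<lambda>x. h (a - x))"
    by (rule integrable_const_bound[where B=K]) (use hb in auto)
  have int_c: "integrable \<mu> (\<lambda>x. h (c - x))"
    by (rule integrable_const_bound[where B=K]) (use hb in auto)
  have nn: "AE x in \<mu>. 0 \<le> h (a - x) - h (c - x)"
    using pos by eventually_elim (use mono[of "a - x" "c - x" for x] ac in auto)
  have "(\<integral>x. h (a - x) - h (c - x) \<partial>\<mu>) = 0"
    using eq int_a int_c by (simp add: Bochner_Integration.integral_diff)
  then have "AE x in \<mu>. h (a - x) - h (c - x) = 0"
    using nn int_a int_c by (subst (asm) integral_nonneg_eq_0_iff_AE) auto
  then have "AE x in \<mu>. x \<notin> I"
  proof eventually_elim
    fix x assume x: "h (a - x) - h (c - x) = 0"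
    show "x \<notin> I"
    proof
      assume "x \<in> I"
      then have "a - x < t" "t < c - x" "c - x \<le> c" by (auto simp: I_def)
      then have "h (a - x) = q" "h (c - x) < q" using below above by auto
      then show False using x by simp
    qed
  qed
  then have "emeasure \<mu> I = 0"
    using sets_eq_imp_space_eq[OF sets]
    by (subst (asm) AE_iff_measurable[of I]) (auto simp: I_def)
  then show False using Ipos by simp
qed

lemma (in prob_space) indep_integral_split:
  fixes \<Phi> :: "'z \<Rightarrow> 'z \<Rightarrow> real" and T S :: "'z measure" and U V :: "'a \<Rightarrow> 'z"
  assumes ind: "indep_var S U T V"
    and meas: "(\<lambda>w. \<Phi> (fst w) (snd w)) \<in> borel_measurable (S \<Otimes>\<^sub>M T)"
    and int: "integrable M (\<lambda>\<omega>. \<Phi> (U \<omega>) (V \<omega>))"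
  shows "(\<integral>\<omega>. \<Phi> (U \<omega>) (V \<omega>) \<partial>M) = (\<integral>x. (\<integral>\<omega>. \<Phi> x (V \<omega>) \<partial>M) \<partial>(distr M S U))"
    and "integrable (distr M S U) (\<lambda>x. \<integral>\<omega>. \<Phi> x (V \<omega>) \<partial>M)"
proof -
  have rvU[measurable]: "U \<in> measurable M S" using ind by (rule indep_var_rv1)
  have rvV[measurable]: "V \<in> measurable M T" using ind by (rule indep_var_rv2)
  have eq: "distr M S U \<Otimes>\<^sub>M distr M T V = distr M (S \<Otimes>\<^sub>M T) (\<lambda>x. (U x, V x))"
    using ind by (simp add: indep_var_distribution_eq)
  interpret PU: prob_space "distr M S U" by (rule prob_space_distr) simp
  interpret PV: prob_space "distr M T V" by (rule prob_space_distr) simp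
  interpret PUV: pair_prob_space "distr M S U" "distr M T V" ..
  note [measurable] = meas
  have intp: "integrable (distr M S U \<Otimes>\<^sub>M distr M T V) (\<lambda>w. \<Phi> (fst w) (snd w))"
    unfolding eq by (subst integrable_distr_eq) (use int in auto)
  have "(\<integral>\<omega>. \<Phi> (U \<omega>) (V \<omega>) \<partial>M) = (\<integral>w. \<Phi> (fst w) (snd w) \<partial>(distr M (S \<Otimes>\<^sub>M T) (\<lambda>x. (U x, V x))))"
    by (subst integral_distr) auto
  also have "\<dots> = (\<integral>w. \<Phi> (fst w) (snd w) \<partial>(distr M S U \<Otimes>\<^sub>M distr M T V))"
    unfolding eq ..
  also have "\<dots> = (\<integral>x. (\<integral>z. \<Phi> x z \<partial>(distr M T V)) \<partial>(distr M S U))"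
    using PUV.integral_fst'[OF intp] by simp
  also have "\<dots> = (\<integral>x. (\<integral>\<omega>. \<Phi> x (V \<omega>) \<partial>M) \<partial>(distr M S U))"
  proof (intro Bochner_Integration.integral_cong refl)
    fix x assume "x \<in> space (distr M S U)"
    then have m: "(\<lambda>z. \<Phi> x z) \<in> borel_measurable T"
      using measurable_Pair2[OF meas, of x] by simp
    show "(\<integral>z. \<Phi> x z \<partial>(distr M T V)) = (\<integral>\<omega>. \<Phi> x (V \<omega>) \<partial>M)"
      using m by (subst integral_distr) auto
  qed
  finally show "(\<integral>\<omega>. \<Phi> (U \<omega>) (V \<omega>) \<partial>M) = (\<integral>x. (\<integral>\<omega>. \<Phi> x (V \<omega>) \<partial>M) \<partial>(distr M S U))" .
  have I1: "integrable (distr M S U) (\<lambda>x. \<integral>z. \<Phi> x z \<partial>(distr M T V))"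
    using PUV.integrable_fst'[OF intp] by simp
  have eqf: "(\<integral>z. \<Phi> x z \<partial>(distr M T V)) = (\<integral>\<omega>. \<Phi> x (V \<omega>) \<partial>M)"
    if "x \<in> space (distr M S U)" for x
  proof -
    have m: "(\<lambda>z. \<Phi> x z) \<in> borel_measurable T"
      using measurable_Pair2[OF meas, of x] that by simp
    show ?thesis using m by (subst integral_distr) auto
  qed
  show "integrable (distr M S U) (\<lambda>x. \<integral>\<omega>. \<Phi> x (V \<omega>) \<partial>M)"
  proof -
    have "integrable (distr M S U) (\<lambda>x. \<integral>z. \<Phi> x z \<partial>(distr M T V)) \<longleftrightarrow>
        integrable (distr M S U) (\<lambda>x. \<integral>\<omega>. \<Phi> x (V \<omega>) \<partial>M)"
      by (intro Bochner_Integration.integrable_cong refl eqf)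
    then show ?thesis using I1 by simp
  qed
qed

definition coordv :: "nat \<Rightarrow> (nat \<Rightarrow> real) \<Rightarrow> real" where "coordv k z = z k"

lemma state_vec: "state a X i M j \<omega> = state a coordv i M j (\<lambda>k. X k \<omega>)"
  by (induction j) (auto simp: coordv_def)

lemma level_vec: "level a X n C i M k \<omega> = level a coordv n C i M k (\<lambda>k. X k \<omega>)"
  unfolding level_def using state_vec by metis

lemma cost_vec: "cost p a X n C i M \<omega> = cost p a coordv n C i M (\<lambda>k. X k \<omega>)"
  unfolding cost_def using level_vec[of a X n C i M _ \<omega>] by (simp add: coordv_def)

lemma state_frame:
  assumes "i + j \<le> n" "\<forall>k\<in>{i+1..n}. z k = z' k"
  shows "state a coordv i M j z = state a coordv i M j z'"
  using assms by (induction j) (auto simp: coordv_def)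

lemma cost_frame:
  assumes "\<forall>k\<in>{i+1..n}. z k = z' k"
  shows "cost p a coordv n C i M z = cost p a coordv n C i M z'"
  unfolding cost_def level_def
proof (intro sum.cong refl)
  fix k assume k: "k \<in> {i+1..n}"
  have "state a coordv i M (k - i) z = state a coordv i M (k - i) z'"
    using k assms by (intro state_frame) auto
  moreover have "state a coordv i M (k - 1 - i) z = state a coordv i M (k - 1 - i) z'"
    using k assms by (intro state_frame) auto
  moreover have "z k = z' k" using k assms by auto
  ultimately show "p k * ((if k = n then C else state a coordv i M (k - i) z) + coordv k z -
          (if k - 1 = n then C else state a coordv i M (k - 1 - i) z)) =
         p k * ((if k = n then C else state a coordv i M (k - i) z') + coordv k z' -
          (if k - 1 = n then C else state a coordv i M (k - 1 - i) z'))"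
    by (simp add: coordv_def)
qed

lemma state_meas:
  assumes "i + j \<le> n"
  shows "(\<lambda>w. state a coordv i (fst w) j (snd w)) \<in> borel_measurable (borel \<Otimes>\<^sub>M PiM {i+1..n} (\<lambda>_. borel))"
  using assms
proof (induction j)
  case 0
  then show ?case by simp
next
  case (Suc j)
  have c: "(\<lambda>w. snd w (i + Suc j)) \<in> borel_measurable (borel \<Otimes>\<^sub>M PiM {i+1..n} (\<lambda>_. borel))"
    using Suc.prems by (intro measurable_compose[OF measurable_snd measurable_component_singleton]) auto
  show ?case using Suc c by (simp add: coordv_def)
qed

lemma cost_meas:
  "(\<lambda>w. cost p a coordv n C i (fst w) (snd w)) \<in> borel_measurable (borel \<Otimes>\<^sub>M PiM {i+1..n} (\<lambda>_. borel))"
  unfolding cost_def level_def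
proof (intro borel_measurable_sum borel_measurable_times borel_measurable_const borel_measurable_add
    borel_measurable_diff measurable_If)
  fix k assume k: "k \<in> {i+1..n}"
  show "(\<lambda>w. state a coordv i (fst w) (k - i) (snd w)) \<in> borel_measurable (borel \<Otimes>\<^sub>M PiM {i+1..n} (\<lambda>_. borel))"
    using k by (intro state_meas) auto
  show "(\<lambda>w. state a coordv i (fst w) (k - 1 - i) (snd w)) \<in> borel_measurable (borel \<Otimes>\<^sub>M PiM {i+1..n} (\<lambda>_. borel))"
    using k by (intro state_meas) auto
  show "(\<lambda>w. coordv k (snd w)) \<in> borel_measurable (borel \<Otimes>\<^sub>M PiM {i+1..n} (\<lambda>_. borel))"
    unfolding coordv_def
    using k by (intro measurable_compose[OF measurable_snd measurable_component_singleton]) auto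
qed auto

lemma state_lip: "\<bar>state a X i M j \<omega> - state a X i M' j \<omega>\<bar> \<le> \<bar>M - M'\<bar>"
proof (induction j)
  case (Suc j)
  then show ?case by (simp add: max_def) linarith
qed simp

lemma state_bound:
  "\<bar>state a X i M j \<omega>\<bar> \<le> \<bar>M\<bar> + (\<Sum>k\<in>{i+1..i+j}. \<bar>a k\<bar> + \<bar>X k \<omega>\<bar>)"
proof (induction j)
  case (Suc j)
  have e: "{i+1..i+Suc j} = insert (i + Suc j) {i+1..i+j}" by auto
  show ?case unfolding e using Suc by (simp add: max_def) linarith
qed simp

locale tou = prob_space P for P :: "'a measure" +
  fixes X :: "nat \<Rightarrow> 'a \<Rightarrow> real" and f :: "nat \<Rightarrow> real \<Rightarrow> real" and p :: "nat \<Rightarrow> real" and n :: nat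
  assumes n2: "n \<ge> 2"
    and pmin: "\<forall>k\<in>{1..n}. p n \<le> p k"
    and padj: "\<forall>k\<in>{1..n}. p k \<noteq> p (nxt n k)"
    and indep: "indep_vars (\<lambda>_. borel) X {1..n}"
    and distX: "\<forall>k\<in>{1..n}. distributed P lborel (X k) (\<lambda>x. ennreal (f k x))"
    and fpos: "\<forall>k\<in>{1..n}. \<forall>x. f k x \<ge> 0 \<and> (f k x > 0 \<longleftrightarrow> x \<ge> 0)"
    and integX: "\<forall>k\<in>{1..n}. integrable P (X k)"
begin

lemma Xmeas[measurable]: "k \<in> {1..n} \<Longrightarrow> X k \<in> borel_measurable P"
  using distributed_measurable[OF distX[rule_format]] by simp

definition JJ :: "(nat \<Rightarrow> real) \<Rightarrow> real \<Rightarrow> nat \<Rightarrow> real \<Rightarrow> real" where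
  "JJ a C i M = (\<integral>\<omega>. cost p a X n C i M \<omega> \<partial>P)"

definition Lp :: real where "Lp = (\<Sum>k\<in>{1..n}. 2 * \<bar>p k\<bar>)"

lemma Lp_nonneg: "0 \<le> Lp" unfolding Lp_def by (intro sum_nonneg) auto

lemma restrict_meas:
  assumes "I \<subseteq> {1..n}"
  shows "(\<lambda>\<omega>. restrict (\<lambda>k. X k \<omega>) I) \<in> measurable P (PiM I (\<lambda>_. borel))"
  using assms by (intro measurable_restrict) auto

lemma cost_restrict:
  "cost p a X n C i M \<omega> = cost p a coordv n C i M (restrict (\<lambda>k. X k \<omega>) {i+1..n})"
  unfolding cost_vec[of p a X n C i M \<omega>] by (intro cost_frame) auto

lemma cost_measP[measurable]: "cost p a X n C i M \<in> borel_measurable P"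
proof -
  have "(\<lambda>\<omega>. cost p a coordv n C i (fst (M, restrict (\<lambda>k. X k \<omega>) {i+1..n})) (snd (M, restrict (\<lambda>k. X k \<omega>) {i+1..n}))) \<in> borel_measurable P"
    by (rule measurable_compose[OF _ cost_meas]) (intro measurable_Pair measurable_const restrict_meas; auto)
  moreover have "cost p a X n C i M = (\<lambda>\<omega>. cost p a coordv n C i M (restrict (\<lambda>k. X k \<omega>) {i+1..n}))"
    by (rule ext) (rule cost_restrict)
  ultimately show ?thesis by (simp only: fst_conv snd_conv)
qed

lemma cost_lip:
  "\<bar>cost p a X n C i M \<omega> - cost p a X n C i M' \<omega>\<bar> \<le> Lp * \<bar>M - M'\<bar>"
proof -
  have lv: "\<bar>level a X n C i M k \<omega> - level a X n C i M' k \<omega>\<bar> \<le> \<bar>M - M'\<bar>" for k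
    unfolding level_def using state_lip by auto
  have "\<bar>cost p a X n C i M \<omega> - cost p a X n C i M' \<omega>\<bar> =
      \<bar>\<Sum>k\<in>{i+1..n}. p k * ((level a X n C i M k \<omega> - level a X n C i M' k \<omega>) - (level a X n C i M (k-1) \<omega> - level a X n C i M' (k-1) \<omega>))\<bar>"
    unfolding cost_def by (simp add: sum_subtractf[symmetric] algebra_simps)
  also have "\<dots> \<le> (\<Sum>k\<in>{i+1..n}. \<bar>p k * ((level a X n C i M k \<omega> - level a X n C i M' k \<omega>) - (level a X n C i M (k-1) \<omega> - level a X n C i M' (k-1) \<omega>))\<bar>)"
    by (rule sum_abs)
  also have "\<dots> \<le> (\<Sum>k\<in>{i+1..n}. 2 * \<bar>p k\<bar> * \<bar>M - M'\<bar>)"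
  proof (intro sum_mono)
    fix k
    have "\<bar>(level a X n C i M k \<omega> - level a X n C i M' k \<omega>) - (level a X n C i M (k-1) \<omega> - level a X n C i M' (k-1) \<omega>)\<bar> \<le> 2 * \<bar>M - M'\<bar>"
      using lv[of k] lv[of "k-1"] abs_triangle_ineq4[of "level a X n C i M k \<omega> - level a X n C i M' k \<omega>" "level a X n C i M (k-1) \<omega> - level a X n C i M' (k-1) \<omega>"] by linarith
    then show "\<bar>p k * ((level a X n C i M k \<omega> - level a X n C i M' k \<omega>) - (level a X n C i M (k-1) \<omega> - level a X n C i M' (k-1) \<omega>))\<bar> \<le> 2 * \<bar>p k\<bar> * \<bar>M - M'\<bar>"
      unfolding abs_mult by (metis abs_ge_zero mult.assoc mult.left_commute mult_left_mono)
  qed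
  also have "\<dots> \<le> (\<Sum>k\<in>{1..n}. 2 * \<bar>p k\<bar> * \<bar>M - M'\<bar>)"
    by (intro sum_mono2) auto
  also have "\<dots> = Lp * \<bar>M - M'\<bar>" unfolding Lp_def by (simp add: sum_distrib_right)
  finally show ?thesis .
qed

lemma abs3: "\<bar>u\<bar> \<le> B \<Longrightarrow> \<bar>v\<bar> \<le> B \<Longrightarrow> \<bar>u + x - v\<bar> \<le> 2*B + \<bar>x\<bar>" for u v x B :: real
  by (auto simp: abs_le_iff abs_if split: if_splits)

lemma level_bound:
  assumes "i \<le> k" "k \<le> n"
  shows "\<bar>level a X n C i M k \<omega>\<bar> \<le> \<bar>C\<bar> + \<bar>M\<bar> + (\<Sum>k'\<in>{i+1..n}. \<bar>a k'\<bar> + \<bar>X k' \<omega>\<bar>)"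
proof -
  have s0: "0 \<le> (\<Sum>k'\<in>{i+1..n}. \<bar>a k'\<bar> + \<bar>X k' \<omega>\<bar>)" by (intro sum_nonneg) auto
  have "(\<Sum>k'\<in>{i+1..i+(k-i)}. \<bar>a k'\<bar> + \<bar>X k' \<omega>\<bar>) \<le> (\<Sum>k'\<in>{i+1..n}. \<bar>a k'\<bar> + \<bar>X k' \<omega>\<bar>)"
    using assms by (intro sum_mono2) auto
  then show ?thesis unfolding level_def using state_bound[of a X i M "k - i" \<omega>] s0 by auto
qed

lemma cost_integrable: "integrable P (cost p a X n C i M)"
proof (rule Bochner_Integration.integrable_bound)
  define B where "B \<omega> = \<bar>C\<bar> + \<bar>M\<bar> + (\<Sum>k'\<in>{i+1..n}. \<bar>a k'\<bar> + \<bar>X k' \<omega>\<bar>)" for \<omega>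
  have iB: "integrable P B" unfolding B_def
    by (intro Bochner_Integration.integrable_add Bochner_Integration.integrable_sum integrable_const integrable_abs)
      (use integX in auto)
  show "integrable P (\<lambda>\<omega>. \<Sum>k\<in>{i+1..n}. \<bar>p k\<bar> * (2 * B \<omega> + \<bar>X k \<omega>\<bar>))"
    by (intro Bochner_Integration.integrable_sum integrable_mult_right Bochner_Integration.integrable_add integrable_abs iB)
      (use integX in auto)
  show "AE \<omega> in P. norm (cost p a X n C i M \<omega>) \<le> norm (\<Sum>k\<in>{i+1..n}. \<bar>p k\<bar> * (2 * B \<omega> + \<bar>X k \<omega>\<bar>))"
  proof (rule AE_I2)
    fix \<omega>
    have "\<bar>cost p a X n C i M \<omega>\<bar> \<le> (\<Sum>k\<in>{i+1..n}. \<bar>p k * (level a X n C i M k \<omega> + X k \<omega> - level a X n C i M (k - 1) \<omega>)\<bar>)"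
      unfolding cost_def by (rule sum_abs)
    also have "\<dots> \<le> (\<Sum>k\<in>{i+1..n}. \<bar>p k\<bar> * (2 * B \<omega> + \<bar>X k \<omega>\<bar>))"
    proof (intro sum_mono)
      fix k assume k: "k \<in> {i+1..n}"
      have "\<bar>level a X n C i M k \<omega> + X k \<omega> - level a X n C i M (k - 1) \<omega>\<bar> \<le> 2 * B \<omega> + \<bar>X k \<omega>\<bar>"
        using level_bound[of i k a C M \<omega>] level_bound[of i "k-1" a C M \<omega>] k unfolding B_def
        by (intro abs3) auto
      then show "\<bar>p k * (level a X n C i M k \<omega> + X k \<omega> - level a X n C i M (k - 1) \<omega>)\<bar> \<le> \<bar>p k\<bar> * (2 * B \<omega> + \<bar>X k \<omega>\<bar>)"
        unfolding abs_mult by (intro mult_left_mono) auto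
    qed
    also have "\<dots> \<le> norm (\<Sum>k\<in>{i+1..n}. \<bar>p k\<bar> * (2 * B \<omega> + \<bar>X k \<omega>\<bar>))" by simp
    finally show "norm (cost p a X n C i M \<omega>) \<le> norm (\<Sum>k\<in>{i+1..n}. \<bar>p k\<bar> * (2 * B \<omega> + \<bar>X k \<omega>\<bar>))" by simp
  qed
qed simp

lemma JJ_lip: "\<bar>JJ a C i M - JJ a C i M'\<bar> \<le> Lp * \<bar>M - M'\<bar>"
proof -
  have "\<bar>JJ a C i M - JJ a C i M'\<bar> = \<bar>\<integral>\<omega>. cost p a X n C i M \<omega> - cost p a X n C i M' \<omega> \<partial>P\<bar>"
    unfolding JJ_def by (simp add: Bochner_Integration.integral_diff[OF cost_integrable cost_integrable])
  also have "\<dots> \<le> (\<integral>\<omega>. \<bar>cost p a X n C i M \<omega> - cost p a X n C i M' \<omega>\<bar> \<partial>P)"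
    by (rule integral_abs_bound)
  also have "\<dots> \<le> (\<integral>\<omega>. Lp * \<bar>M - M'\<bar> \<partial>P)"
    by (intro integral_mono Bochner_Integration.integrable_diff integrable_abs cost_integrable cost_lip) auto
  also have "\<dots> = Lp * \<bar>M - M'\<bar>" by (simp add: prob_space)
  finally show ?thesis .
qed

lemma JJ_cont: "continuous_on UNIV (JJ a C i)"
proof -
  have "lipschitz_on Lp UNIV (JJ a C i)"
    unfolding lipschitz_on_def using JJ_lip Lp_nonneg by (auto simp: dist_real_def)
  then show ?thesis by (rule lipschitz_on_continuous_on)
qed

lemma JJ_meas[measurable]: "JJ a C i \<in> borel_measurable borel"
  by (rule borel_measurable_continuous_onI) (rule JJ_cont)

lemma JJ_last:
  "JJ a C (n - 1) M = p n * (C + (\<integral>\<omega>. X n \<omega> \<partial>P) - M)"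
proof -
  have "JJ a C (n - 1) M = (\<integral>\<omega>. p n * (C + X n \<omega> - M) \<partial>P)"
  proof -
    have "cost p a X n C (n - 1) M = (\<lambda>\<omega>. p n * (C + X n \<omega> - M))"
      by (rule ext) (rule cost_last, use n2 in auto)
    then show ?thesis unfolding JJ_def by simp
  qed
  also have "\<dots> = p n * (C + (\<integral>\<omega>. X n \<omega> \<partial>P) - M)"
    using integX n2 by (simp add: Bochner_Integration.integral_diff Bochner_Integration.integral_add prob_space)
  finally show ?thesis .
qed

lemma JJ_step:
  assumes sn: "Suc s < n"
  shows "JJ a C s M = (\<integral>x. p (Suc s) * (max (a (Suc s)) (M - x) + x - M)
            + JJ a C (Suc s) (max (a (Suc s)) (M - x)) \<partial>(distr P borel (X (Suc s))))"
    and "integrable (distr P borel (X (Suc s))) (\<lambda>x. p (Suc s) * (max (a (Suc s)) (M - x) + x - M)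
            + JJ a C (Suc s) (max (a (Suc s)) (M - x)))"
proof -
  define k where "k = Suc s"
  define A where "A = {k}"
  define B where "B = {k+1..n}"
  define U where "U \<omega> = restrict (\<lambda>j. X j \<omega>) A" for \<omega>
  define V where "V \<omega> = restrict (\<lambda>j. X j \<omega>) B" for \<omega>
  define \<Phi> where "\<Phi> u z = p k * (max (a k) (M - u k) + u k - M) + cost p a coordv n C k (max (a k) (M - u k)) z" for u z
  define G where "G x = p k * (max (a k) (M - x) + x - M) + JJ a C k (max (a k) (M - x))" for x
  have kn: "k \<in> {1..n}" using sn by (simp add: k_def)
  have ind: "indep_var (PiM A (\<lambda>_. borel)) U (PiM B (\<lambda>_. borel)) V"
    unfolding U_def V_def using sn
    by (intro indep_var_restrict[OF indep]) (auto simp: A_def B_def k_def)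
  have path: "cost p a X n C s M \<omega> = \<Phi> (U \<omega>) (V \<omega>)" for \<omega>
  proof -
    have "cost p a X n C s M \<omega> = p k * (max (a k) (M - X k \<omega>) + X k \<omega> - M)
        + cost p a X n C k (max (a k) (M - X k \<omega>)) \<omega>"
      unfolding k_def by (rule cost_step[OF sn])
    also have "cost p a X n C k (max (a k) (M - X k \<omega>)) \<omega> = cost p a coordv n C k (max (a k) (M - X k \<omega>)) (V \<omega>)"
      unfolding V_def B_def by (rule cost_restrict)
    finally show ?thesis unfolding \<Phi>_def U_def A_def by simp
  qed
  have m1: "(\<lambda>w. fst w k) \<in> borel_measurable (PiM A (\<lambda>_. borel) \<Otimes>\<^sub>M PiM B (\<lambda>_. borel))"
    by (intro measurable_compose[OF measurable_fst measurable_component_singleton]) (auto simp: A_def)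
  have m2: "(\<lambda>w. cost p a coordv n C k (fst (max (a k) (M - fst w k), snd w)) (snd (max (a k) (M - fst w k), snd w)))
      \<in> borel_measurable (PiM A (\<lambda>_. borel) \<Otimes>\<^sub>M PiM B (\<lambda>_. borel))"
    by (rule measurable_compose[OF _ cost_meas[of p a n C k, folded B_def]])
      (intro measurable_Pair measurable_snd; use m1 in measurable)
  have meas: "(\<lambda>w. \<Phi> (fst w) (snd w)) \<in> borel_measurable (PiM A (\<lambda>_. borel) \<Otimes>\<^sub>M PiM B (\<lambda>_. borel))"
  proof -
    note m1[measurable]
    note m2' = m2[simplified]
    note m2'[measurable]
    show ?thesis unfolding \<Phi>_def by measurable
  qed
  have int: "integrable P (\<lambda>\<omega>. \<Phi> (U \<omega>) (V \<omega>))"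
    using cost_integrable[of a C s M] by (simp add: path[symmetric])
  have "JJ a C s M = (\<integral>\<omega>. \<Phi> (U \<omega>) (V \<omega>) \<partial>P)"
    unfolding JJ_def path ..
  also have "\<dots> = (\<integral>u. (\<integral>\<omega>. \<Phi> u (V \<omega>) \<partial>P) \<partial>(distr P (PiM A (\<lambda>_. borel)) U))"
    by (rule indep_integral_split(1)[where \<Phi>=\<Phi>, OF ind]) (fact meas, fact int)
  also have inner: "\<dots> = (\<integral>u. G (u k) \<partial>(distr P (PiM A (\<lambda>_. borel)) U))"
  proof (intro Bochner_Integration.integral_cong refl)
    fix u
    have cr: "(\<lambda>\<omega>. cost p a coordv n C k (max (a k) (M - u k)) (V \<omega>)) = cost p a X n C k (max (a k) (M - u k))"
      unfolding V_def B_def by (rule ext) (rule cost_restrict[symmetric])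
    have ci: "integrable P (\<lambda>\<omega>. cost p a coordv n C k (max (a k) (M - u k)) (V \<omega>))"
      unfolding cr by (rule cost_integrable)
    have "(\<integral>\<omega>. cost p a coordv n C k (max (a k) (M - u k)) (V \<omega>) \<partial>P) = JJ a C k (max (a k) (M - u k))"
      unfolding JJ_def cr ..
    then show "(\<integral>\<omega>. \<Phi> u (V \<omega>) \<partial>P) = G (u k)"
      unfolding \<Phi>_def G_def using ci
      by (simp add: Bochner_Integration.integral_add prob_space)
  qed
  also have "\<dots> = (\<integral>\<omega>. G (U \<omega> k) \<partial>P)"
  proof (rule integral_distr)
    show "U \<in> measurable P (PiM A (\<lambda>_. borel))" unfolding U_def A_def using kn
      by (intro restrict_meas) auto
    have "(\<lambda>u. u k) \<in> borel_measurable (PiM A (\<lambda>_. borel))"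
      by (rule measurable_component_singleton) (simp add: A_def)
    then show "(\<lambda>u. G (u k)) \<in> borel_measurable (PiM A (\<lambda>_. borel))"
      unfolding G_def by measurable
  qed
  also have "\<dots> = (\<integral>\<omega>. G (X k \<omega>) \<partial>P)" unfolding U_def A_def by simp
  also have "\<dots> = (\<integral>x. G x \<partial>(distr P borel (X k)))"
    by (rule integral_distr[symmetric]) (use kn in \<open>auto simp: G_def\<close>)
  finally show "JJ a C s M = (\<integral>x. p (Suc s) * (max (a (Suc s)) (M - x) + x - M)
            + JJ a C (Suc s) (max (a (Suc s)) (M - x)) \<partial>(distr P borel (X (Suc s))))" unfolding G_def k_def .
  have Um: "U \<in> measurable P (PiM A (\<lambda>_. borel))" unfolding U_def A_def using kn
    by (intro restrict_meas) auto
  have eqG: "(\<integral>\<omega>. \<Phi> u (V \<omega>) \<partial>P) = G (u k)" for u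
  proof -
    have cr: "(\<lambda>\<omega>. cost p a coordv n C k (max (a k) (M - u k)) (V \<omega>)) = cost p a X n C k (max (a k) (M - u k))"
      unfolding V_def B_def by (rule ext) (rule cost_restrict[symmetric])
    have ci: "integrable P (\<lambda>\<omega>. cost p a coordv n C k (max (a k) (M - u k)) (V \<omega>))"
      unfolding cr by (rule cost_integrable)
    have "(\<integral>\<omega>. cost p a coordv n C k (max (a k) (M - u k)) (V \<omega>) \<partial>P) = JJ a C k (max (a k) (M - u k))"
      unfolding JJ_def cr ..
    then show ?thesis
      unfolding \<Phi>_def G_def using ci
      by (simp add: Bochner_Integration.integral_add prob_space)
  qed
  have "integrable (distr P (PiM A (\<lambda>_. borel)) U) (\<lambda>u. \<integral>\<omega>. \<Phi> u (V \<omega>) \<partial>P)"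
    by (rule indep_integral_split(2)[where \<Phi>=\<Phi>, OF ind]) (fact meas, fact int)
  then have "integrable (distr P (PiM A (\<lambda>_. borel)) U) (\<lambda>u. G (u k))"
    unfolding eqG .
  moreover have Gm: "(\<lambda>u. G (u k)) \<in> borel_measurable (PiM A (\<lambda>_. borel))"
  proof -
    have "(\<lambda>u. u k) \<in> borel_measurable (PiM A (\<lambda>_. borel))"
      by (rule measurable_component_singleton) (simp add: A_def)
    then show ?thesis unfolding G_def by measurable
  qed
  ultimately have "integrable P (\<lambda>\<omega>. G (U \<omega> k))"
    using Um by (subst (asm) integrable_distr_eq) auto
  then have "integrable P (\<lambda>\<omega>. G (X k \<omega>))" unfolding U_def A_def by simp
  moreover have Gb: "G \<in> borel_measurable borel" unfolding G_def by measurable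
  ultimately have "integrable (distr P borel (X k)) G"
    using kn by (subst integrable_distr_eq) auto
  then show "integrable (distr P borel (X (Suc s))) (\<lambda>x. p (Suc s) * (max (a (Suc s)) (M - x) + x - M)
            + JJ a C (Suc s) (max (a (Suc s)) (M - x)))" unfolding G_def k_def .
qed

abbreviation mu :: "nat \<Rightarrow> real measure" where "mu k \<equiv> distr P borel (X k)"

lemma mu_prob: "k \<in> {1..n} \<Longrightarrow> prob_space (mu k)"
  by (rule prob_space_distr) simp

lemma mu_sets[simp]: "sets (mu k) = sets borel" by simp
lemma mu_space[simp]: "space (mu k) = UNIV" by simp

lemma f_meas: "k \<in> {1..n} \<Longrightarrow> (\<lambda>x. ennreal (f k x)) \<in> borel_measurable borel"
  using distributed_borel_measurable[OF distX[rule_format]] by simp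

lemma mu_emeasure:
  assumes k: "k \<in> {1..n}" and A: "A \<in> sets borel"
  shows "emeasure (mu k) A = (\<integral>\<^sup>+x. ennreal (f k x) * indicator A x \<partial>lborel)"
proof -
  have "mu k = distr P lborel (X k)" by (rule distr_cong) auto
  also have "\<dots> = density lborel (\<lambda>x. ennreal (f k x))"
    by (rule distributed_distr_eq_density[OF distX[rule_format, OF k]])
  finally show ?thesis using A f_meas[OF k] by (simp add: emeasure_density)
qed

lemma mu_null:
  assumes k: "k \<in> {1..n}" and A: "A \<in> sets borel" and N: "AE x in lborel. x \<notin> A \<or> f k x = 0"
  shows "emeasure (mu k) A = 0"
proof -
  have "AE x in lborel. ennreal (f k x) * indicator A x = 0"
    using N by eventually_elim (auto simp: indicator_def)
  then have "(\<integral>\<^sup>+x. ennreal (f k x) * indicator A x \<partial>lborel) = (\<integral>\<^sup>+(x::real). 0 \<partial>lborel)"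
    by (rule nn_integral_cong_AE)
  then show ?thesis unfolding mu_emeasure[OF k A] by simp
qed

lemma mu_single: "k \<in> {1..n} \<Longrightarrow> AE x in mu k. x \<noteq> c"
proof -
  assume k: "k \<in> {1..n}"
  have "emeasure (mu k) {c} = 0"
  proof (rule mu_null[OF k])
    show "AE x in lborel. x \<notin> {c} \<or> f k x = 0"
      using AE_lborel_singleton[of c] by eventually_elim auto
  qed simp
  then show ?thesis
    by (subst AE_iff_measurable[of "{c}"]) auto
qed

lemma mu_pos: "k \<in> {1..n} \<Longrightarrow> AE x in mu k. 0 < x"
proof -
  assume k: "k \<in> {1..n}"
  have "emeasure (mu k) {..0} = 0"
  proof (rule mu_null[OF k])
    show "AE x in lborel. x \<notin> {..0} \<or> f k x = 0"
      using AE_lborel_singleton[of 0]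
    proof eventually_elim
      fix x :: real assume x0: "x \<noteq> 0"
      show "x \<notin> {..0} \<or> f k x = 0"
      proof (cases "x < 0")
        case True
        then have "\<not> f k x > 0" "f k x \<ge> 0" using fpos k by auto
        then show ?thesis by linarith
      next
        case False
        then show ?thesis using x0 by simp
      qed
    qed
  qed simp
  moreover have "{x \<in> space (mu k). \<not> 0 < x} = {..0}" by auto
  ultimately show ?thesis
    by (subst AE_iff_measurable[of "{..0}"]) simp_all
qed

lemma mu_posI:
  assumes k: "k \<in> {1..n}" and lu: "0 \<le> l" "l < u"
  shows "emeasure (mu k) {l<..<u} \<noteq> 0"
proof
  assume "emeasure (mu k) {l<..<u} = 0"
  then have "(\<integral>\<^sup>+x. ennreal (f k x) * indicator {l<..<u} x \<partial>lborel) = 0"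
    using mu_emeasure[OF k] by simp
  then have "AE x in lborel. ennreal (f k x) * indicator {l<..<u} x = 0"
    using f_meas[OF k] by (subst (asm) nn_integral_0_iff_AE) auto
  then have "AE x in lborel. x \<notin> {l<..<u}"
  proof eventually_elim
    fix x assume "ennreal (f k x) * indicator {l<..<u} x = 0"
    moreover have "x \<in> {l<..<u} \<Longrightarrow> f k x > 0" using fpos k lu by auto
    ultimately show "x \<notin> {l<..<u}" by (auto simp: indicator_def)
  qed
  then have "emeasure lborel {l<..<u} = 0"
    by (subst (asm) AE_iff_measurable[of "{l<..<u}"]) auto
  then show False using lu by simp
qed

lemma mu_integrable: "k \<in> {1..n} \<Longrightarrow> integrable (mu k) (\<lambda>x. x)"
  using integX by (subst integrable_distr_eq) auto

end

lemma state_cong_a: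
  "i + j < n \<Longrightarrow> (\<forall>k. i < k \<longrightarrow> k < n \<longrightarrow> a k = a' k) \<Longrightarrow> state a X i M j \<omega> = state a' X i M j \<omega>"
  by (induction j) auto

lemma cost_cong_a:
  assumes "\<forall>k. s < k \<longrightarrow> k < n \<longrightarrow> a k = a' k"
  shows "cost p a X n C s M \<omega> = cost p a' X n C s M \<omega>"
  unfolding cost_def level_def
proof (intro sum.cong refl)
  fix k assume k: "k \<in> {s+1..n}"
  have "k \<noteq> n \<Longrightarrow> state a X s M (k - s) \<omega> = state a' X s M (k - s) \<omega>"
    using k assms by (intro state_cong_a) auto
  moreover have "k - 1 \<noteq> n \<Longrightarrow> state a X s M (k - 1 - s) \<omega> = state a' X s M (k - 1 - s) \<omega>"
    using k assms by (intro state_cong_a) auto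
  ultimately show "p k * ((if k = n then C else state a X s M (k - s) \<omega>) + X k \<omega> -
          (if k - 1 = n then C else state a X s M (k - 1 - s) \<omega>)) =
       p k * ((if k = n then C else state a' X s M (k - s) \<omega>) + X k \<omega> -
          (if k - 1 = n then C else state a' X s M (k - 1 - s) \<omega>))"
    by auto
qed

lemma mstar_step_cong:
  assumes "\<forall>j. start_idx n i < j \<longrightarrow> j < n \<longrightarrow> ms j = ms' j"
  shows "mstar_step P X p n C ms i = mstar_step P X p n C ms' i"
proof -
  have "Jfrom P X p n C ms (start_idx n i) = Jfrom P X p n C ms' (start_idx n i)"
    unfolding Jfrom_def
    by (rule ext, rule arg_cong[where f="integral\<^sup>L P"], rule ext, rule cost_cong_a)
      (use assms in \<open>auto simp: eff_res_def\<close>)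
  then show ?thesis unfolding mstar_step_def by simp
qed

lemma mvec_other: "k \<noteq> n - Suc d \<Longrightarrow> mvec P X p n C (Suc d) k = mvec P X p n C d k"
  by (simp add: Let_def)

lemma mvec_stable:
  assumes "1 \<le> k" "n - d \<le> k"
  shows "mvec P X p n C (d + e) k = mvec P X p n C d k"
proof (induction e)
  case (Suc e)
  have "k \<noteq> n - Suc (d + e)" using assms by arith
  then have "mvec P X p n C (Suc (d + e)) k = mvec P X p n C (d + e) k" by (rule mvec_other)
  then show ?case using Suc by (simp only: add_Suc_right)
qed simp

lemma opt_res_fix:
  assumes k: "1 \<le> k" "k < n"
  shows "opt_res P X p n C k = mstar_step P X p n C (opt_res P X p n C) k"
proof -
  define d where "d = n - 1 - k"
  have kd: "k = n - Suc d" using k by (simp add: d_def)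
  have e1: "n - 1 = Suc d + (n - 1 - Suc d)" using k by (simp add: d_def)
  have "opt_res P X p n C k = mvec P X p n C (Suc d + (n - 1 - Suc d)) k"
    by (simp only: opt_res_def e1[symmetric])
  also have "\<dots> = mvec P X p n C (Suc d) k"
    using k kd by (intro mvec_stable) auto
  also have "\<dots> = mstar_step P X p n C (mvec P X p n C d) k"
    using kd by (simp add: Let_def)
  also have "\<dots> = mstar_step P X p n C (opt_res P X p n C) k"
  proof (rule mstar_step_cong, intro allI impI)
    fix j assume j: "start_idx n k < j" "j < n"
    then have "k < j" using k by (simp add: start_idx_def)
    have e2: "n - 1 = d + (n - 1 - d)" using k by (simp add: d_def)
    have "opt_res P X p n C j = mvec P X p n C (d + (n - 1 - d)) j"
      by (simp only: opt_res_def e2[symmetric])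
    also have "\<dots> = mvec P X p n C d j"
      using k \<open>k < j\<close> kd by (intro mvec_stable) auto
    finally show "mvec P X p n C d j = opt_res P X p n C j" by simp
  qed
  finally show ?thesis .
qed

lemma Inf_sol:
  fixes g :: "real \<Rightarrow> real" and q :: real
  assumes "continuous_on UNIV g"
  defines "S \<equiv> {M. 0 \<le> M \<and> q = g M}"
  shows "S = {} \<Longrightarrow> Inf {ereal M | M. 0 \<le> M \<and> q = g M} = \<infinity>"
    and "S \<noteq> {} \<Longrightarrow> \<exists>m\<in>S. Inf {ereal M | M. 0 \<le> M \<and> q = g M} = ereal m \<and> (\<forall>x\<in>S. m \<le> x)"
proof -
  have eq: "{ereal M | M. 0 \<le> M \<and> q = g M} = ereal ` S" unfolding S_def by auto
  show "S = {} \<Longrightarrow> Inf {ereal M | M. 0 \<le> M \<and> q = g M} = \<infinity>" unfolding eq by (simp add: top_ereal_def)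
  assume ne: "S \<noteq> {}"
  have cl: "closed S" unfolding S_def
    using assms(1) by (intro closed_Collect_conj closed_Collect_le closed_Collect_eq continuous_intros) (auto simp: continuous_on_eq_continuous_at)
  have bb: "bdd_below S" unfolding S_def by (rule bdd_belowI[of _ 0]) auto
  have m: "Inf S \<in> S" by (rule closed_contains_Inf[OF ne bb cl])
  have "Inf (ereal ` S) = ereal (Inf S)"
    using ereal_Inf'[OF bb ne] by simp
  then show "\<exists>m\<in>S. Inf {ereal M | M. 0 \<le> M \<and> q = g M} = ereal m \<and> (\<forall>x\<in>S. m \<le> x)"
    unfolding eq using m bb by (intro bexI[of _ "Inf S"]) (auto intro: cInf_lower)
qed

context tou begin

definition aC :: "real \<Rightarrow> nat \<Rightarrow> real" where "aC C k = eff_res C (opt_res P X p n C) k"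
definition JC :: "real \<Rightarrow> nat \<Rightarrow> real \<Rightarrow> real" where "JC C s = JJ (aC C) C s"
definition gC :: "real \<Rightarrow> nat \<Rightarrow> real \<Rightarrow> real" where "gC C s M = - deriv (JC C s) M"
definition hC :: "real \<Rightarrow> nat \<Rightarrow> real \<Rightarrow> real" where
  "hC C s y = (if y \<le> aC C (Suc s) then p (Suc s) else gC C (Suc s) y)"
definition Pmax :: real where "Pmax = Max (p ` {1..n})"

lemma p_le_Pmax: "k \<in> {1..n} \<Longrightarrow> p k \<le> Pmax"
  unfolding Pmax_def by (intro Max_ge) auto

lemma pn_le: "k \<in> {1..n} \<Longrightarrow> p n \<le> p k" using pmin by auto

lemma Jfrom_eq: "Jfrom P X p n C (opt_res P X p n C) s = JC C s"
  unfolding Jfrom_def JC_def JJ_def aC_def by (rule ext) simp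

lemma mstar_eq:
  "mstar_step P X p n C (opt_res P X p n C) i =
    (if p (nxt n i) \<le> p i then 0 else Inf {ereal M |M. 0 \<le> M \<and> p i = gC C (start_idx n i) M})"
  unfolding mstar_step_def Jfrom_eq gC_def by simp

lemma nxt_lt: "k < n \<Longrightarrow> nxt n k = Suc k" by (simp add: nxt_def)

definition Props :: "real \<Rightarrow> nat \<Rightarrow> bool" where
  "Props C s \<longleftrightarrow> (\<forall>M. (JC C s has_real_derivative - gC C s M) (at M)) \<and> continuous_on UNIV (gC C s)
     \<and> (\<forall>M\<le>0. gC C s M = p (Suc s)) \<and> (\<forall>M M'. M \<le> M' \<longrightarrow> M' \<le> C \<longrightarrow> gC C s M' \<le> gC C s M)
     \<and> (\<forall>M. p n \<le> gC C s M \<and> gC C s M \<le> Pmax)"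

lemma Props_base: "Props C (n - 1)"
proof -
  have n1: "Suc (n - 1) = n" using n2 by simp
  have d: "(JC C (n - 1) has_real_derivative - p n) (at M)" for M
    unfolding JC_def JJ_last by (auto intro!: derivative_eq_intros)
  then have g: "gC C (n - 1) M = p n" for M unfolding gC_def using DERIV_imp_deriv by (metis minus_minus)
  show ?thesis unfolding Props_def g n1 using d p_le_Pmax[of n] n2 by (auto simp: g)
qed

lemma a_facts:
  assumes C: "0 \<le> C" and k: "1 \<le> k" "k < n" and PC: "Props C k"
  shows "0 \<le> aC C k" "aC C k \<le> C"
    and "aC C k < C \<Longrightarrow> aC C k < y \<Longrightarrow> y \<le> C \<Longrightarrow> gC C k y \<le> p k"
    and "aC C k = C \<Longrightarrow> 0 < C \<Longrightarrow> p k < p (Suc k) \<and> (\<forall>y. 0 \<le> y \<longrightarrow> y < C \<longrightarrow> gC C k y \<noteq> p k)"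
proof -
  have ms: "opt_res P X p n C k = (if p (Suc k) \<le> p k then 0 else Inf {ereal M |M. 0 \<le> M \<and> p k = gC C k M})"
  proof -
    have st: "start_idx n k = k" using k by (simp add: start_idx_def)
    have "opt_res P X p n C k = mstar_step P X p n C (opt_res P X p n C) k" by (rule opt_res_fix[OF k])
    also have "\<dots> = (if p (Suc k) \<le> p k then 0 else Inf {ereal M |M. 0 \<le> M \<and> p k = gC C k M})"
      unfolding mstar_eq st nxt_lt[OF k(2)] ..
    finally show ?thesis .
  qed
  have a_def': "aC C k = real_of_ereal (min (opt_res P X p n C k) (ereal C))"
    unfolding aC_def eff_res_def ..
  have cont: "continuous_on UNIV (gC C k)" and g0: "gC C k 0 = p (Suc k)"
    and mono: "\<And>M M'. M \<le> M' \<Longrightarrow> M' \<le> C \<Longrightarrow> gC C k M' \<le> gC C k M"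
    using PC unfolding Props_def by auto
  define S where "S = {M. 0 \<le> M \<and> p k = gC C k M}"
  have "0 \<le> aC C k \<and> aC C k \<le> C \<and> (aC C k < C \<longrightarrow> aC C k < y \<longrightarrow> y \<le> C \<longrightarrow> gC C k y \<le> p k)
     \<and> (aC C k = C \<longrightarrow> 0 < C \<longrightarrow> p k < p (Suc k) \<and> (\<forall>y. 0 \<le> y \<longrightarrow> y < C \<longrightarrow> gC C k y \<noteq> p k))"
  proof (cases "p (Suc k) \<le> p k")
    case True
    then have a0: "aC C k = 0" using C unfolding a_def' ms by (simp add: min_def)
    have "gC C k y \<le> p k" if "0 < y" "y \<le> C" for y
      using mono[of 0 y] g0 True that by simp
    then show ?thesis using a0 C by auto
  next
    case False
    show ?thesis
    proof (cases "S = {}")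
      case True
      then have "opt_res P X p n C k = \<infinity>"
        using Inf_sol(1)[OF cont, of "p k"] False unfolding ms S_def by simp
      then have aC: "aC C k = C" unfolding a_def' by simp
      show ?thesis using aC C False True unfolding S_def by auto
    next
      case ne: False
      obtain m where m: "m \<in> S" "Inf {ereal M |M. 0 \<le> M \<and> p k = gC C k M} = ereal m" "\<forall>x\<in>S. m \<le> x"
        using Inf_sol(2)[OF cont, of "p k"] ne unfolding S_def by blast
      have ms': "opt_res P X p n C k = ereal m" using False m(2) unfolding ms by simp
      have m0: "0 \<le> m" "p k = gC C k m" using m(1) by (auto simp: S_def)
      have aC: "aC C k = min m C" unfolding a_def' ms' by (simp add: min_def)
      have p3: "gC C k y \<le> p k" if "aC C k < y" "y \<le> C" for y
      proof -
        have "m < y" using that by (simp add: aC min_def split: if_splits)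
        then show "gC C k y \<le> p k" using mono[of m y] m0 \<open>y \<le> C\<close> by simp
      qed
      have p4: "p k < p (Suc k) \<and> (\<forall>y. 0 \<le> y \<longrightarrow> y < C \<longrightarrow> gC C k y \<noteq> p k)" if "aC C k = C"
      proof -
        have "C \<le> m" using that by (simp add: aC min_def split: if_splits)
        then show ?thesis using m(3) False unfolding S_def by force
      qed
      have p12: "0 \<le> aC C k" "aC C k \<le> C" using aC C m0 by auto
      show ?thesis
      proof (intro conjI)
        show "aC C k < C \<longrightarrow> aC C k < y \<longrightarrow> y \<le> C \<longrightarrow> gC C k y \<le> p k" using p3 by blast
        show "aC C k = C \<longrightarrow> 0 < C \<longrightarrow> p k < p (Suc k) \<and> (\<forall>y. 0 \<le> y \<longrightarrow> y < C \<longrightarrow> gC C k y \<noteq> p k)"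
          using p4 by blast
      qed (use p12 in auto)
    qed
  qed
  then show "0 \<le> aC C k" "aC C k \<le> C"
    and "aC C k < C \<Longrightarrow> aC C k < y \<Longrightarrow> y \<le> C \<Longrightarrow> gC C k y \<le> p k"
    and "aC C k = C \<Longrightarrow> 0 < C \<Longrightarrow> p k < p (Suc k) \<and> (\<forall>y. 0 \<le> y \<longrightarrow> y < C \<longrightarrow> gC C k y \<noteq> p k)"
    by auto
qed

end

context tou begin

lemma max_lip: "\<bar>max a (M - x) - max a (M' - x)\<bar> \<le> \<bar>M - M'\<bar>" for a M M' x :: real
  by (auto simp: max_def)

lemma Props_step:
  assumes C: "0 \<le> C" and sn: "Suc s < n" and PC: "Props C (Suc s)"
  shows "Props C s" and "\<And>M. gC C s M = (\<integral>x. hC C s (M - x) \<partial>mu (Suc s))"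
proof -
  define k where "k = Suc s"
  define q where "q = p k"
  define a where "a = aC C k"
  define g' where "g' = gC C k"
  define h where "h = hC C s"
  have kn: "k \<in> {1..n}" "1 \<le> k" "k < n" using sn by (auto simp: k_def)
  have hdef: "h y = (if y \<le> a then q else g' y)" for y
    unfolding h_def hC_def a_def q_def g'_def k_def ..
  have g'cont: "continuous_on UNIV g'" and g'0: "\<And>M. M \<le> 0 \<Longrightarrow> g' M = p (Suc k)"
    and g'mono: "\<And>M M'. M \<le> M' \<Longrightarrow> M' \<le> C \<Longrightarrow> g' M' \<le> g' M"
    and g'bnd: "\<And>M. p n \<le> g' M \<and> g' M \<le> Pmax"
    and Jder: "\<And>M. (JC C k has_real_derivative - g' M) (at M)"
    using PC unfolding Props_def g'_def k_def by auto
  have a0: "0 \<le> a" and aC: "a \<le> C" and a3: "\<And>y. a < C \<Longrightarrow> a < y \<Longrightarrow> y \<le> C \<Longrightarrow> g' y \<le> q"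
    using a_facts[OF C kn(2,3)] PC unfolding a_def g'_def q_def k_def by auto
  have qb: "p n \<le> q" "q \<le> Pmax" using pn_le[OF kn(1)] p_le_Pmax[OF kn(1)] by (auto simp: q_def)
  have hb: "p n \<le> h y \<and> h y \<le> Pmax" for y using qb g'bnd by (simp add: hdef)
  have habs: "\<bar>h y\<bar> \<le> \<bar>p n\<bar> + \<bar>Pmax\<bar>" for y using hb[of y] by (simp add: abs_le_iff) linarith
  have h0: "h y = q" if "y \<le> 0" for y using that a0 by (simp add: hdef)
  have hmono: "h y' \<le> h y" if "y \<le> y'" "y' \<le> C" for y y'
  proof (cases "y' \<le> a")
    case True then show ?thesis using that by (simp add: hdef)
  next
    case False
    show ?thesis
    proof (cases "y \<le> a")
      case True
      then show ?thesis using False that a3[of y'] by (simp add: hdef)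
    next
      case False2: False
      then show ?thesis using False that g'mono[of y y'] by (simp add: hdef)
    qed
  qed
  have g'meas[measurable]: "g' \<in> borel_measurable borel"
    by (rule borel_measurable_continuous_onI[OF g'cont])
  have hmeas[measurable]: "h \<in> borel_measurable borel"
  proof -
    have "(\<lambda>y. if y \<le> a then q else g' y) \<in> borel_measurable borel" by measurable
    then show ?thesis by (simp add: hdef[abs_def])
  qed
  have hcont: "isCont h y" if "y \<noteq> a" for y
  proof (cases "y < a")
    case True
    have "eventually (\<lambda>z. z \<in> {..<a}) (nhds y)" using True by (intro eventually_nhds_in_open) auto
    then have "eventually (\<lambda>z. h z = q) (nhds y)" by eventually_elim (simp add: hdef)
    then show ?thesis by (subst isCont_cong) auto
  next
    case False
    then have ya: "a < y" using that by simp
    have "eventually (\<lambda>z. z \<in> {a<..}) (nhds y)" using ya by (intro eventually_nhds_in_open) auto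
    then have "eventually (\<lambda>z. h z = g' z) (nhds y)" by eventually_elim (simp add: hdef)
    then show ?thesis using g'cont by (subst isCont_cong) (auto simp: continuous_on_eq_continuous_at)
  qed
  interpret MU: prob_space "mu k" using mu_prob[OF kn(1)] .
  have fin: "finite_measure (mu k)" by unfold_locales
  have m1: "measure (mu k) UNIV = 1" using MU.prob_space by simp
  define \<phi> where "\<phi> M x = q * (max a (M - x) + x - M) + JC C k (max a (M - x))" for M x
  have Jrep: "JC C s M = (\<integral>x. \<phi> M x \<partial>mu k)" for M
    unfolding JC_def \<phi>_def q_def a_def k_def using JJ_step(1)[OF sn, where a="aC C" and C=C and M=M] by simp
  have \<phi>int: "integrable (mu k) (\<phi> M)" for M
    unfolding JC_def \<phi>_def q_def a_def k_def using JJ_step(2)[OF sn, where a="aC C" and C=C and M=M] by simp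
  have \<phi>lip: "\<bar>\<phi> M x - \<phi> M' x\<bar> \<le> (2 * \<bar>q\<bar> + Lp) * \<bar>M - M'\<bar>" for M M' x
  proof -
    have l1: "\<bar>max a (M - x) - max a (M' - x)\<bar> \<le> \<bar>M - M'\<bar>" by (rule max_lip)
    have l2: "\<bar>JC C k (max a (M - x)) - JC C k (max a (M' - x))\<bar> \<le> Lp * \<bar>M - M'\<bar>"
      using JJ_lip[of "aC C" C k "max a (M - x)" "max a (M' - x)"] l1 Lp_nonneg unfolding JC_def
      by (meson mult_left_mono order_trans)
    have "\<bar>(max a (M - x) - max a (M' - x)) - (M - M')\<bar> \<le> 2 * \<bar>M - M'\<bar>"
      using l1 abs_triangle_ineq4[of "max a (M - x) - max a (M' - x)" "M - M'"] by linarith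
    then have l3: "\<bar>q * ((max a (M - x) - max a (M' - x)) - (M - M'))\<bar> \<le> \<bar>q\<bar> * (2 * \<bar>M - M'\<bar>)"
      unfolding abs_mult by (intro mult_left_mono) auto
    have "\<phi> M x - \<phi> M' x = q * ((max a (M - x) - max a (M' - x)) - (M - M'))
        + (JC C k (max a (M - x)) - JC C k (max a (M' - x)))"
      unfolding \<phi>_def by (simp add: algebra_simps)
    then have "\<bar>\<phi> M x - \<phi> M' x\<bar> \<le> \<bar>q * ((max a (M - x) - max a (M' - x)) - (M - M'))\<bar>
        + \<bar>JC C k (max a (M - x)) - JC C k (max a (M' - x))\<bar>" by (simp add: abs_triangle_ineq)
    also have "\<dots> \<le> \<bar>q\<bar> * (2 * \<bar>M - M'\<bar>) + Lp * \<bar>M - M'\<bar>" using l2 l3 by linarith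
    finally show ?thesis by (simp add: algebra_simps)
  qed
  have deriv: "(JC C s has_real_derivative - (\<integral>x. h (M0 - x) \<partial>mu k)) (at M0)" for M0
  proof -
    have "((\<lambda>M. \<integral>x. \<phi> M x \<partial>mu k) has_real_derivative (\<integral>x. - h (M0 - x) \<partial>mu k)) (at M0)"
    proof (rule deriv_integral[OF fin \<phi>int \<phi>lip])
      show "(\<lambda>x. - h (M0 - x)) \<in> borel_measurable (mu k)" by measurable
      show "AE x in mu k. ((\<lambda>M. \<phi> M x) has_real_derivative - h (M0 - x)) (at M0)"
        using mu_single[OF kn(1), of "M0 - a"]
      proof eventually_elim
        fix x assume x: "x \<noteq> M0 - a"
        show "((\<lambda>M. \<phi> M x) has_real_derivative - h (M0 - x)) (at M0)"
        proof (cases "M0 - x < a")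
          case True
          have d: "((\<lambda>M. q * (a + x - M) + JC C k a) has_real_derivative - q) (at M0)"
            by (auto intro!: derivative_eq_intros)
          show ?thesis
          proof (rule has_field_derivative_transform_within_open[where S="{M. M - x < a}"])
            show "((\<lambda>M. q * (a + x - M) + JC C k a) has_real_derivative - h (M0 - x)) (at M0)"
              using d True by (simp add: hdef)
            show "open {M. M - x < a}" by (intro open_Collect_less continuous_intros)
          qed (use True in \<open>auto simp: \<phi>_def max_def\<close>)
        next
          case False
          then have xa: "a < M0 - x" using x by auto
          have d0: "(JC C k has_real_derivative - g' (M0 + - x)) (at (M0 + - x))" by (rule Jder)
          have d: "((\<lambda>M. JC C k (M + - x)) has_real_derivative - g' (M0 - x)) (at M0)"
            using DERIV_shift[THEN iffD1, OF d0] by simp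
          show ?thesis
          proof (rule has_field_derivative_transform_within_open[where S="{M. a < M - x}"])
            show "((\<lambda>M. JC C k (M + - x)) has_real_derivative - h (M0 - x)) (at M0)"
              using d xa by (simp add: hdef)
            show "open {M. a < M - x}" by (intro open_Collect_less continuous_intros)
          qed (use xa in \<open>auto simp: \<phi>_def max_def\<close>)
        qed
      qed
    qed
    moreover have "(\<lambda>M. \<integral>x. \<phi> M x \<partial>mu k) = JC C s" using Jrep by (simp add: fun_eq_iff)
    ultimately show ?thesis by simp
  qed
  have grep: "gC C s M = (\<integral>x. h (M - x) \<partial>mu k)" for M
    unfolding gC_def using DERIV_imp_deriv[OF deriv[of M]] by simp
  then show "\<And>M. gC C s M = (\<integral>x. hC C s (M - x) \<partial>mu (Suc s))" unfolding h_def k_def by simp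
  have hint: "integrable (mu k) (\<lambda>x. h (M - x))" for M
    by (rule MU.integrable_const_bound[where B="\<bar>p n\<bar> + \<bar>Pmax\<bar>"]) (use habs in auto)
  have P1: "\<forall>M. (JC C s has_real_derivative - gC C s M) (at M)" using deriv grep by simp
  have P2: "continuous_on UNIV (gC C s)"
  proof (intro continuous_at_imp_continuous_on ballI)
    fix M0 :: real
    have "isCont (\<lambda>M. \<integral>x. h (M - x) \<partial>mu k) M0"
      by (rule cont_integral_shift[OF fin _ hmeas habs hcont mu_single[OF kn(1)]]) auto
    then show "isCont (gC C s) M0" using grep by (simp add: fun_eq_iff[symmetric] grep[abs_def])
  qed
  have P3: "\<forall>M\<le>0. gC C s M = p (Suc s)"
  proof (intro allI impI)
    fix M :: real assume M: "M \<le> 0"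
    have ae: "AE x in mu k. h (M - x) = q"
      using mu_pos[OF kn(1)] by eventually_elim (rule h0, use M in auto)
    have mh: "(\<lambda>x. h (M - x)) \<in> borel_measurable (mu k)" by measurable
    have "(\<integral>x. h (M - x) \<partial>mu k) = (\<integral>x. q \<partial>mu k)"
      by (rule integral_cong_AE[OF mh _ ae]) simp
    then show "gC C s M = p (Suc s)" using grep[of M] by (simp add: q_def m1 k_def[symmetric])
  qed
  have P4: "\<forall>M M'. M \<le> M' \<longrightarrow> M' \<le> C \<longrightarrow> gC C s M' \<le> gC C s M"
  proof (intro allI impI)
    fix M M' :: real assume MM: "M \<le> M'" "M' \<le> C"
    have "(\<integral>x. h (M' - x) \<partial>mu k) \<le> (\<integral>x. h (M - x) \<partial>mu k)"
    proof (rule integral_mono_AE[OF hint hint])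
      show "AE x in mu k. h (M' - x) \<le> h (M - x)"
        using mu_pos[OF kn(1)] by eventually_elim (rule hmono, use MM in auto)
    qed
    then show "gC C s M' \<le> gC C s M" using grep by simp
  qed
  have P5: "\<forall>M. p n \<le> gC C s M \<and> gC C s M \<le> Pmax"
  proof
    fix M
    have "(\<integral>x. p n \<partial>mu k) \<le> (\<integral>x. h (M - x) \<partial>mu k)"
      by (rule integral_mono) (use hint hb in auto)
    moreover have "(\<integral>x. h (M - x) \<partial>mu k) \<le> (\<integral>x. Pmax \<partial>mu k)"
      by (rule integral_mono) (use hint hb in auto)
    ultimately show "p n \<le> gC C s M \<and> gC C s M \<le> Pmax" using grep by (simp add: m1)
  qed
  show "Props C s" unfolding Props_def using P1 P2 P3 P4 P5 by blast
qed

end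

lemma min_Inf_cong:
  fixes m :: real
  assumes "\<forall>x. 0 \<le> x \<longrightarrow> x \<le> m \<longrightarrow> (P x \<longleftrightarrow> Q x)"
  shows "min (Inf {ereal M |M. 0 \<le> M \<and> P M}) (ereal m) = min (Inf {ereal M |M. 0 \<le> M \<and> Q M}) (ereal m)"
proof -
  have *: "min (Inf {ereal M |M. 0 \<le> M \<and> P M}) (ereal m) \<le> min (Inf {ereal M |M. 0 \<le> M \<and> Q M}) (ereal m)"
    if H: "\<forall>x. 0 \<le> x \<longrightarrow> x \<le> m \<longrightarrow> (P x \<longleftrightarrow> Q x)" for P Q
  proof -
    have "min (Inf {ereal M |M. 0 \<le> M \<and> P M}) (ereal m) \<le> Inf {ereal M |M. 0 \<le> M \<and> Q M}"
    proof (rule Inf_greatest)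
      fix z assume "z \<in> {ereal M |M. 0 \<le> M \<and> Q M}"
      then obtain x where x: "z = ereal x" "0 \<le> x" "Q x" by auto
      show "min (Inf {ereal M |M. 0 \<le> M \<and> P M}) (ereal m) \<le> z"
      proof (cases "x \<le> m")
        case True
        then have "P x" using H x by auto
        then have "Inf {ereal M |M. 0 \<le> M \<and> P M} \<le> ereal x" using x by (intro Inf_lower) auto
        then show ?thesis using x by (simp add: min.coboundedI1)
      next
        case False
        then show ?thesis using x by (simp add: min.coboundedI2)
      qed
    qed
    then show ?thesis by simp
  qed
  show ?thesis
    using *[of P Q] *[of Q P] assms by (auto intro: antisym)
qed

context tou begin

lemma Props_all: "0 \<le> C \<Longrightarrow> s < n \<Longrightarrow> Props C s"
proof -
  assume C: "0 \<le> C" and s: "s < n"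
  then have "s \<le> n - 1" by simp
  then show "Props C s"
  proof (induction s rule: inc_induct)
    case base then show ?case by (rule Props_base)
  next
    case (step s)
    then show ?case using Props_step(1)[OF C] by simp
  qed
qed

lemma grep_all: "0 \<le> C \<Longrightarrow> Suc s < n \<Longrightarrow> gC C s M = (\<integral>x. hC C s (M - x) \<partial>mu (Suc s))"
  using Props_step(2)[OF _ _ Props_all] by simp

lemma Props_facts:
  assumes "0 \<le> C" "s < n"
  shows "continuous_on UNIV (gC C s)" "\<And>M. M \<le> 0 \<Longrightarrow> gC C s M = p (Suc s)"
    "\<And>M M'. M \<le> M' \<Longrightarrow> M' \<le> C \<Longrightarrow> gC C s M' \<le> gC C s M"
    "\<And>M. p n \<le> gC C s M" "\<And>M. gC C s M \<le> Pmax"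
  using Props_all[OF assms] unfolding Props_def by auto

lemma start_idx_lt: "i \<in> {1..n} \<Longrightarrow> start_idx n i < n"
  using n2 by (auto simp: start_idx_def)

lemma Suc_start: "i \<in> {1..n} \<Longrightarrow> p (Suc (start_idx n i)) = p (nxt n i)"
  by (auto simp: start_idx_def nxt_def)

lemma Mstar_eq: "i \<in> {1..n} \<Longrightarrow> Mstar P X p n C i = mstar_step P X p n C (opt_res P X p n C) i"
  unfolding Mstar_def using opt_res_fix[of i n P X p C] by auto

lemma MR_formula:
  assumes C: "0 \<le> C" and i: "i \<in> {1..n}"
  shows "MR P X p n C i = max 0 (gC C (start_idx n i) C - p i)"
proof -
  define s where "s = start_idx n i"
  define g where "g = gC C s"
  have sn: "s < n" using start_idx_lt[OF i] by (simp add: s_def)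
  have gcont: "continuous_on UNIV g" and g0: "g 0 = p (nxt n i)"
    and gmono: "\<And>M M'. M \<le> M' \<Longrightarrow> M' \<le> C \<Longrightarrow> g M' \<le> g M"
    using Props_facts[OF C sn] Suc_start[OF i] by (auto simp: g_def s_def)
  have MR: "MR P X p n C i = (if Mstar P X p n C i \<le> ereal C then 0 else g C - p i)"
    unfolding MR_def Jopt_def Jfrom_eq g_def gC_def s_def ..
  have Ms: "Mstar P X p n C i = (if p (nxt n i) \<le> p i then 0 else Inf {ereal M |M. 0 \<le> M \<and> p i = g M})"
    unfolding Mstar_eq[OF i] mstar_eq g_def s_def ..
  have ivt: "\<exists>y. 0 \<le> y \<and> y \<le> C \<and> g y = p i" if "g C \<le> p i" "p i \<le> g 0"
    using IVT2'[of g C "p i" 0] that C continuous_on_subset[OF gcont] by auto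
  have ge: "gC C (start_idx n i) C = g C" by (simp add: g_def s_def)
  show ?thesis
  proof (cases "p (nxt n i) \<le> p i")
    case True
    then have "g C \<le> p i" using gmono[of 0 C] C g0 by simp
    then show ?thesis using True C unfolding MR Ms ge by simp
  next
    case False
    define S where "S = {M. 0 \<le> M \<and> p i = g M}"
    show ?thesis
    proof (cases "S = {}")
      case True
      then have "Mstar P X p n C i = \<infinity>" using Inf_sol(1)[OF gcont, of "p i"] False unfolding Ms S_def by simp
      moreover have "p i \<le> g C"
      proof (rule ccontr)
        assume "\<not> p i \<le> g C"
        then obtain y where "0 \<le> y" "g y = p i" using ivt False g0 by force
        then show False using True by (auto simp: S_def)
      qed
      ultimately show ?thesis unfolding MR ge by simp
    next
      case ne: False
      obtain m where m: "m \<in> S" "Inf {ereal M |M. 0 \<le> M \<and> p i = g M} = ereal m" "\<forall>x\<in>S. m \<le> x"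
        using Inf_sol(2)[OF gcont, of "p i"] ne unfolding S_def by blast
      have Mm: "Mstar P X p n C i = ereal m" using False m(2) unfolding Ms by simp
      show ?thesis
      proof (cases "m \<le> C")
        case True
        then have "g C \<le> p i" using gmono[of m C] m(1) by (simp add: S_def)
        then show ?thesis using True unfolding MR Mm ge by simp
      next
        case mC: False
        have "p i \<le> g C"
        proof (rule ccontr)
          assume "\<not> p i \<le> g C"
          then obtain y where "0 \<le> y" "y \<le> C" "g y = p i" using ivt False g0 by force
          then show False using m(3) mC by (auto simp: S_def)
        qed
        then show ?thesis using mC unfolding MR Mm ge by simp
      qed
    qed
  qed
qed

lemma opt_res_val:
  assumes k: "1 \<le> k" "k < n"
  shows "opt_res P X p n C k = (if p (Suc k) \<le> p k then 0 else Inf {ereal M |M. 0 \<le> M \<and> p k = gC C k M})"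
proof -
  have st: "start_idx n k = k" using k by (simp add: start_idx_def)
  have "opt_res P X p n C k = mstar_step P X p n C (opt_res P X p n C) k" by (rule opt_res_fix[OF k])
  also have "\<dots> = (if p (Suc k) \<le> p k then 0 else Inf {ereal M |M. 0 \<le> M \<and> p k = gC C k M})"
    unfolding mstar_eq st nxt_lt[OF k(2)] ..
  finally show ?thesis .
qed

lemma opt_res_nonneg: "1 \<le> k \<Longrightarrow> k < n \<Longrightarrow> 0 \<le> opt_res P X p n C k"
  unfolding opt_res_val by (auto intro!: Inf_greatest)

lemma ereal_aC:
  assumes "0 \<le> C" "1 \<le> k" "k < n"
  shows "ereal (aC C k) = min (opt_res P X p n C k) (ereal C)"
proof -
  have "0 \<le> opt_res P X p n C k" using opt_res_nonneg assms by simp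
  then have "0 \<le> min (opt_res P X p n C k) (ereal C)" "min (opt_res P X p n C k) (ereal C) \<le> ereal C"
    using assms by auto
  then show ?thesis unfolding aC_def eff_res_def
    by (cases "min (opt_res P X p n C k) (ereal C)") auto
qed

lemma a_facts2:
  assumes C: "0 \<le> C" and k: "1 \<le> k" "k < n"
  shows "p (Suc k) \<le> p k \<Longrightarrow> aC C k = 0"
    and "0 \<le> y \<Longrightarrow> y \<le> C \<Longrightarrow> gC C k y = p k \<Longrightarrow> aC C k \<le> y"
proof -
  show "p (Suc k) \<le> p k \<Longrightarrow> aC C k = 0"
    using ereal_aC[OF C k] opt_res_val[OF k, of C] C by (simp add: min_def)
  assume y: "0 \<le> y" "y \<le> C" "gC C k y = p k"
  have "opt_res P X p n C k \<le> ereal y"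
    unfolding opt_res_val[OF k] using y by (auto intro!: Inf_lower)
  then have "ereal (aC C k) \<le> ereal y" unfolding ereal_aC[OF C k] by (simp add: min.coboundedI1)
  then show "aC C k \<le> y" by simp
qed

lemma g_last: "gC C (n - 1) M = p n"
proof -
  have d: "(JC C (n - 1) has_real_derivative - p n) (at M)"
    unfolding JC_def JJ_last by (auto intro!: derivative_eq_intros)
  then show ?thesis unfolding gC_def using DERIV_imp_deriv by (metis minus_minus)
qed

lemma gC_meas[measurable]: "0 \<le> C \<Longrightarrow> s < n \<Longrightarrow> gC C s \<in> borel_measurable borel"
  by (rule borel_measurable_continuous_onI) (rule Props_facts)

lemma consistency:
  assumes C: "0 \<le> C" "0 \<le> C'" and s: "s < n"
  shows "\<forall>M \<le> min C C'. gC C s M = gC C' s M"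
proof -
  define m where "m = min C C'"
  have "s \<le> n - 1" using s by simp
  then show ?thesis unfolding m_def[symmetric]
  proof (induction s rule: inc_induct)
    case base
    have "gC C (n - Suc 0) M = gC C' (n - Suc 0) M" for M using g_last[of C M] g_last[of C' M] by simp
    then show ?case by simp
  next
    case (step s)
    define k where "k = Suc s"
    have sn: "Suc s < n" using step by simp
    have k: "1 \<le> k" "k < n" "k \<in> {1..n}" using sn by (auto simp: k_def)
    have IH: "\<forall>M\<le>m. gC C k M = gC C' k M" using step.IH by (simp add: k_def)
    have mC: "m \<le> C" "m \<le> C'" by (auto simp: m_def)
    have oeq: "min (opt_res P X p n C k) (ereal m) = min (opt_res P X p n C' k) (ereal m)"
    proof (cases "p (Suc k) \<le> p k")
      case True then show ?thesis unfolding opt_res_val[OF k(1,2)] by simp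
    next
      case False
      have "min (Inf {ereal M |M. 0 \<le> M \<and> p k = gC C k M}) (ereal m)
          = min (Inf {ereal M |M. 0 \<le> M \<and> p k = gC C' k M}) (ereal m)"
        by (rule min_Inf_cong) (use IH in auto)
      then show ?thesis unfolding opt_res_val[OF k(1,2)] using False by simp
    qed
    have aiff: "y \<le> aC C k \<longleftrightarrow> y \<le> aC C' k" if "y \<le> m" for y
    proof -
      have "y \<le> aC C k \<longleftrightarrow> ereal y \<le> min (opt_res P X p n C k) (ereal C)"
        using ereal_aC[OF C(1) k(1,2)] by (metis ereal_less_eq(3))
      also have "\<dots> \<longleftrightarrow> ereal y \<le> min (opt_res P X p n C k) (ereal m)" using that mC by auto
      also have "\<dots> \<longleftrightarrow> ereal y \<le> min (opt_res P X p n C' k) (ereal m)" unfolding oeq ..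
      also have "\<dots> \<longleftrightarrow> ereal y \<le> min (opt_res P X p n C' k) (ereal C')" using that mC by auto
      also have "\<dots> \<longleftrightarrow> y \<le> aC C' k"
        using ereal_aC[OF C(2) k(1,2)] by (metis ereal_less_eq(3))
      finally show ?thesis .
    qed
    have heq: "hC C s y = hC C' s y" if "y \<le> m" for y
      unfolding hC_def k_def[symmetric] using aiff[OF that] IH that by auto
    show ?case
    proof (intro allI impI)
      fix M assume M: "M \<le> m"
      have ae: "AE x in mu k. hC C s (M - x) = hC C' s (M - x)"
        using mu_pos[OF k(3)] by eventually_elim (rule heq, use M in auto)
      have gm1[measurable]: "gC C k \<in> borel_measurable borel" by (rule gC_meas[OF C(1) k(2)])
      have gm2[measurable]: "gC C' k \<in> borel_measurable borel" by (rule gC_meas[OF C(2) k(2)])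
      have m1: "(\<lambda>x. hC C s (M - x)) \<in> borel_measurable (mu k)"
        unfolding hC_def k_def[symmetric] by measurable
      have m2: "(\<lambda>x. hC C' s (M - x)) \<in> borel_measurable (mu k)"
        unfolding hC_def k_def[symmetric] by measurable
      show "gC C s M = gC C' s M"
        unfolding grep_all[OF C(1) sn] grep_all[OF C(2) sn] k_def[symmetric]
        by (rule integral_cong_AE[OF m1 m2 ae])
    qed
  qed
qed

end

lemma nxt_in: "2 \<le> n \<Longrightarrow> i \<in> {1..n} \<Longrightarrow> nxt n i \<in> {1..n}" by (auto simp: nxt_def)
lemma prv_in: "2 \<le> n \<Longrightarrow> i \<in> {1..n} \<Longrightarrow> prv n i \<in> {1..n}" by (auto simp: prv_def)
lemma prv_nxt: "2 \<le> n \<Longrightarrow> i \<in> {1..n} \<Longrightarrow> prv n (nxt n i) = i" by (auto simp: nxt_def prv_def)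
lemma nxt_prv: "2 \<le> n \<Longrightarrow> i \<in> {1..n} \<Longrightarrow> nxt n (prv n i) = i" by (auto simp: nxt_def prv_def)

lemma cyc_sum:
  fixes p :: "nat \<Rightarrow> real"
  assumes n2: "n \<ge> 2" and adj: "\<forall>k\<in>{1..n}. p k \<noteq> p (nxt n k)"
  shows "(\<Sum>i=1..n. max 0 (p (nxt n i) - p i)) = pi_max p n"
proof -
  have bij: "bij_betw (nxt n) {1..n} {1..n}"
    by (rule bij_betw_byWitness[where f'="prv n"]) (use n2 prv_nxt nxt_prv nxt_in prv_in in auto)
  have "(\<Sum>i=1..n. max 0 (p (nxt n i) - p i)) =
      (\<Sum>i=1..n. (if p i < p (nxt n i) then p (nxt n i) else 0)) - (\<Sum>i=1..n. (if p i < p (nxt n i) then p i else 0))"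
    by (simp add: sum_subtractf[symmetric]) (intro sum.cong refl, auto simp: max_def)
  also have "(\<Sum>i=1..n. (if p i < p (nxt n i) then p (nxt n i) else 0))
      = (\<Sum>i=1..n. (\<lambda>j. if p (prv n j) < p j then p j else 0) (nxt n i))"
    by (intro sum.cong refl) (use n2 prv_nxt in auto)
  also have "\<dots> = (\<Sum>j=1..n. if p (prv n j) < p j then p j else 0)"
    by (rule sum.reindex_bij_betw[OF bij])
  finally have "(\<Sum>i=1..n. max 0 (p (nxt n i) - p i)) =
      (\<Sum>j=1..n. (if p (prv n j) < p j then p j else 0) - (if p j < p (nxt n j) then p j else 0))"
    by (simp add: sum_subtractf)
  also have "\<dots> = (\<Sum>j=1..n. (if is_local_max p n j then p j else 0) - (if is_local_min p n j then p j else 0))"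
  proof (intro sum.cong refl)
    fix j assume j: "j \<in> {1..n}"
    have d1: "p j \<noteq> p (nxt n j)" using adj j by auto
    have d2: "p (prv n j) \<noteq> p j" using adj prv_in[OF n2 j] nxt_prv[OF n2 j] by force
    show "(if p (prv n j) < p j then p j else 0) - (if p j < p (nxt n j) then p j else 0) =
        (if is_local_max p n j then p j else 0) - (if is_local_min p n j then p j else 0)"
      unfolding is_local_max_def is_local_min_def using d1 d2 by auto
  qed
  also have "\<dots> = (\<Sum>j=1..n. if is_local_max p n j then p j else 0) - (\<Sum>j=1..n. if is_local_min p n j then p j else 0)"
    by (simp add: sum_subtractf)
  also have "\<dots> = pi_max p n"
    unfolding pi_max_def by (simp add: sum.inter_filter[symmetric] conj_commute)
  finally show ?thesis .
qed

context tou begin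

definition Sfun :: "real \<Rightarrow> real" where
  "Sfun C = (\<Sum>i=1..n. max 0 (gC C (start_idx n i) C - p i))"

lemma sum_MR: "0 \<le> C \<Longrightarrow> (\<Sum>i=1..n. MR P X p n C i) = Sfun C"
  unfolding Sfun_def by (intro sum.cong refl MR_formula) auto

lemma Sfun0: "Sfun 0 = pi_max p n"
proof -
  have "gC 0 (start_idx n i) 0 = p (nxt n i)" if "i \<in> {1..n}" for i
    using Props_facts(2)[OF order.refl start_idx_lt[OF that], of 0] Suc_start[OF that] by simp
  then have "Sfun 0 = (\<Sum>i=1..n. max 0 (p (nxt n i) - p i))" unfolding Sfun_def by simp
  also have "\<dots> = pi_max p n" using cyc_sum[OF n2 padj] .
  finally show ?thesis .
qed

lemma G_cross: "0 \<le> C \<Longrightarrow> C \<le> C' \<Longrightarrow> s < n \<Longrightarrow> gC C s C = gC C' s C"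
  using consistency[of C C' s] by auto

lemma Sfun_cross: "0 \<le> C \<Longrightarrow> C \<le> C' \<Longrightarrow> Sfun C = (\<Sum>i=1..n. max 0 (gC C' (start_idx n i) C - p i))"
  unfolding Sfun_def by (intro sum.cong refl) (simp add: G_cross start_idx_lt)

lemma Sfun_cont: "0 \<le> B \<Longrightarrow> continuous_on {0..B} Sfun"
proof -
  assume B: "0 \<le> B"
  have "continuous_on {0..B} (\<lambda>C. \<Sum>i=1..n. max 0 (gC B (start_idx n i) C - p i))"
    by (intro continuous_intros continuous_on_subset[OF Props_facts(1)[OF B start_idx_lt]]) auto
  then show ?thesis by (rule continuous_on_cong[THEN iffD1, rotated 2]) (auto simp: Sfun_cross)
qed

lemma Sfun_antimono: "0 \<le> C \<Longrightarrow> C \<le> C' \<Longrightarrow> Sfun C' \<le> Sfun C"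
proof -
  assume C: "0 \<le> C" "C \<le> C'"
  have "Sfun C' = (\<Sum>i=1..n. max 0 (gC C' (start_idx n i) C' - p i))" unfolding Sfun_def ..
  also have "\<dots> \<le> (\<Sum>i=1..n. max 0 (gC C' (start_idx n i) C - p i))"
    by (intro sum_mono max.mono order.refl diff_right_mono Props_facts(3)) (use C start_idx_lt in auto)
  also have "\<dots> = Sfun C" using Sfun_cross[OF C] by simp
  finally show ?thesis .
qed

lemma Sfun_nonneg: "0 \<le> Sfun C" unfolding Sfun_def by (intro sum_nonneg) auto

end

context tou begin

lemma h_facts:
  assumes C: "0 \<le> C" and sn: "Suc s < n"
  shows "\<And>y y'. y \<le> y' \<Longrightarrow> y' \<le> C \<Longrightarrow> hC C s y' \<le> hC C s y"
    and "\<And>y. y \<le> 0 \<Longrightarrow> hC C s y = p (Suc s)"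
    and "\<And>y. \<bar>hC C s y\<bar> \<le> \<bar>p n\<bar> + \<bar>Pmax\<bar>"
    and "\<And>y. p n \<le> hC C s y \<and> hC C s y \<le> Pmax"
    and "hC C s \<in> borel_measurable borel"
proof -
  define k where "k = Suc s"
  have kn: "k \<in> {1..n}" "1 \<le> k" "k < n" using sn by (auto simp: k_def)
  have hdef: "hC C s y = (if y \<le> aC C k then p k else gC C k y)" for y
    unfolding hC_def k_def ..
  have PC: "Props C k" using Props_all[OF C kn(3)] .
  have g'mono: "\<And>M M'. M \<le> M' \<Longrightarrow> M' \<le> C \<Longrightarrow> gC C k M' \<le> gC C k M"
    and g'bnd: "\<And>M. p n \<le> gC C k M \<and> gC C k M \<le> Pmax"
    using PC unfolding Props_def by auto
  have a0: "0 \<le> aC C k" and a3: "\<And>y. aC C k < C \<Longrightarrow> aC C k < y \<Longrightarrow> y \<le> C \<Longrightarrow> gC C k y \<le> p k"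
    using a_facts[OF C kn(2,3) PC] by auto
  have qb: "p n \<le> p k" "p k \<le> Pmax" using pn_le[OF kn(1)] p_le_Pmax[OF kn(1)] by auto
  show hb: "p n \<le> hC C s y \<and> hC C s y \<le> Pmax" for y using qb g'bnd by (simp add: hdef)
  show "\<bar>hC C s y\<bar> \<le> \<bar>p n\<bar> + \<bar>Pmax\<bar>" for y using hb[of y] by (simp add: abs_le_iff) linarith
  show "hC C s y = p (Suc s)" if "y \<le> 0" for y using that a0 by (simp add: hdef k_def)
  show "hC C s y' \<le> hC C s y" if "y \<le> y'" "y' \<le> C" for y y'
  proof (cases "y' \<le> aC C k")
    case True then show ?thesis using that by (simp add: hdef)
  next
    case False
    show ?thesis
    proof (cases "y \<le> aC C k")
      case True
      then show ?thesis using False that a3[of y'] by (simp add: hdef)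
    next
      case False2: False
      then show ?thesis using False that g'mono[of y y'] by (simp add: hdef)
    qed
  qed
  have [measurable]: "gC C k \<in> borel_measurable borel" by (rule gC_meas[OF C kn(3)])
  show "hC C s \<in> borel_measurable borel"
  proof -
    have "(\<lambda>y. if y \<le> aC C k then p k else gC C k y) \<in> borel_measurable borel" by measurable
    then show ?thesis by (simp add: hdef[abs_def])
  qed
qed

lemma g0_pos:
  assumes C: "0 \<le> C"
  shows "p n < gC C 0 M"
proof -
  have sn: "Suc 0 < n" using n2 by simp
  have k1: "1 \<in> {1..n}" using n2 by simp
  interpret MU: prob_space "mu 1" using mu_prob[OF k1] .
  have p1: "p n < p 1"
    using padj pmin n2 by (metis atLeastAtMost_iff le_less nxt_def one_le_numeral order_trans)
  define l where "l = max 0 (M - aC C 1)"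
  define I where "I = {l<..<l+1}"
  have hm[measurable]: "hC C 0 \<in> borel_measurable borel" using h_facts(5)[OF C sn] .
  have hlow: "p n + (p 1 - p n) * indicator I x \<le> hC C 0 (M - x)" for x
  proof (cases "x \<in> I")
    case True
    then have "M - x \<le> aC C 1" by (auto simp: I_def l_def)
    then have "hC C 0 (M - x) = p 1" by (simp add: hC_def)
    then show ?thesis using True by simp
  next
    case False
    then show ?thesis using h_facts(4)[OF C sn, of "M - x"] by simp
  qed
  have Ipos: "emeasure (mu 1) I \<noteq> 0" unfolding I_def by (rule mu_posI[OF k1]) (auto simp: l_def)
  then have mI: "0 < measure (mu 1) I"
    using MU.emeasure_eq_measure[of I] by (simp add: measure_nonneg less_le)
  have fI: "emeasure (mu 1) I < \<infinity>" using MU.emeasure_finite[of I] by (simp add: less_top)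
  have sI: "I \<in> sets (mu 1)" by (simp add: I_def)
  have intI: "integrable (mu 1) (\<lambda>x. (p 1 - p n) * indicator I x)"
    by (intro integrable_mult_right integrable_real_indicator sI fI)
  have int1: "integrable (mu 1) (\<lambda>x. p n + (p 1 - p n) * indicator I x)"
    by (intro Bochner_Integration.integrable_add MU.integrable_const intI)
  have m1: "measure (mu 1) UNIV = 1" using MU.prob_space by simp
  have m1': "measure (mu (Suc 0)) UNIV = 1" using m1 by simp
  have int2: "integrable (mu 1) (\<lambda>x. hC C 0 (M - x))"
    by (rule MU.integrable_const_bound[where B="\<bar>p n\<bar> + \<bar>Pmax\<bar>"]) (use h_facts(3)[OF C sn] in auto)
  have "p n < p n + (p 1 - p n) * measure (mu 1) I" using p1 mI by simp
  also have "\<dots> = (\<integral>x. p n + (p 1 - p n) * indicator I x \<partial>mu 1)"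
    by (subst Bochner_Integration.integral_add[OF MU.integrable_const intI]) (simp add: m1 m1' sI fI)
  also have "\<dots> \<le> (\<integral>x. hC C 0 (M - x) \<partial>mu 1)"
    by (rule integral_mono[OF int1 int2 hlow])
  also have "\<dots> = gC C 0 M" using grep_all[OF C sn] by simp
  finally show ?thesis .
qed

lemma strict_apply:
  assumes C: "0 \<le> C" and sn: "Suc s < n" and ac: "a < c" and c: "c \<le> C"
    and eq: "gC C s a = gC C s c"
  shows "\<forall>y<c. hC C s y = p (Suc s)"
proof -
  have kn: "Suc s \<in> {1..n}" using sn by auto
  interpret MU: prob_space "mu (Suc s)" using mu_prob[OF kn] .
  show ?thesis
  proof (rule strict_shift[where K="\<bar>p n\<bar> + \<bar>Pmax\<bar>"])
    show "finite_measure (mu (Suc s))" by unfold_locales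
    show "(\<integral>x. hC C s (a - x) \<partial>mu (Suc s)) = (\<integral>x. hC C s (c - x) \<partial>mu (Suc s))"
      using eq grep_all[OF C sn] by simp
  qed (use h_facts[OF C sn] mu_pos[OF kn] mu_posI[OF kn] ac c in auto)
qed

lemma g_at_p:
  assumes C: "0 \<le> C" and sn: "Suc s < n" and y: "y < c"
    and H: "\<forall>y<c. hC C s y = p (Suc s)"
  shows "gC C s y = p (Suc s)"
proof -
  have kn: "Suc s \<in> {1..n}" using sn by auto
  interpret MU: prob_space "mu (Suc s)" using mu_prob[OF kn] .
  have m1: "measure (mu (Suc s)) UNIV = 1" using MU.prob_space by simp
  have hm[measurable]: "hC C s \<in> borel_measurable borel" using h_facts(5)[OF C sn] .
  have ae: "AE x in mu (Suc s). hC C s (y - x) = p (Suc s)"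
    using mu_pos[OF kn] by eventually_elim (use H y in auto)
  have "(\<integral>x. hC C s (y - x) \<partial>mu (Suc s)) = (\<integral>x. p (Suc s) \<partial>mu (Suc s))"
    by (rule integral_cong_AE[OF _ _ ae]) auto
  then show ?thesis using grep_all[OF C sn, of y] m1 by simp
qed

lemma Sfun_strict:
  assumes C1: "0 \<le> C1" and C12: "C1 < C2"
  shows "Sfun C2 < Sfun C1"
proof (rule ccontr)
  assume nless: "\<not> Sfun C2 < Sfun C1"
  have C2: "0 \<le> C2" "0 < C2" using C1 C12 by auto
  define T where "T i C = max 0 (gC C2 (start_idx n i) C - p i)" for i C
  have S1: "Sfun C1 = (\<Sum>i=1..n. T i C1)" unfolding T_def using Sfun_cross[OF C1 less_imp_le[OF C12]] .
  have S2: "Sfun C2 = (\<Sum>i=1..n. T i C2)" unfolding T_def Sfun_def ..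
  have Tle: "T i C2 \<le> T i C1" if "i \<in> {1..n}" for i
    unfolding T_def using Props_facts(3)[OF C2(1) start_idx_lt[OF that], of C1 C2] C12 by auto
  have Teq: "T i C1 = T i C2" if "i \<in> {1..n}" for i
  proof (rule ccontr)
    assume "T i C1 \<noteq> T i C2"
    then have "T i C2 < T i C1" using Tle[OF that] by simp
    then have "(\<Sum>i=1..n. T i C2) < (\<Sum>i=1..n. T i C1)"
      using Tle that by (intro sum_strict_mono_ex1) auto
    then show False using nless S1 S2 by simp
  qed
  define g where "g = gC C2"
  have gmono: "\<And>s M M'. s < n \<Longrightarrow> M \<le> M' \<Longrightarrow> M' \<le> C2 \<Longrightarrow> g s M' \<le> g s M"
    unfolding g_def using Props_facts(3)[OF C2(1)] by blast
  have Q: "g s C1 = g s C2 \<and> (0 < s \<longrightarrow> p s < g s C2)" if "s < n" for s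
    using that
  proof (induction s)
    case 0
    have nn: "n \<in> {1..n}" "start_idx n n = 0" using n2 by (auto simp: start_idx_def)
    have pos: "p n < g 0 C2" unfolding g_def by (rule g0_pos[OF C2(1)])
    have ge: "g 0 C2 \<le> g 0 C1" using gmono[of 0 C1 C2] C12 n2 by simp
    have "max 0 (g 0 C1 - p n) = max 0 (g 0 C2 - p n)" using Teq[OF nn(1)] unfolding T_def g_def nn(2) .
    then show ?case using pos ge by (simp add: max_def split: if_splits)
  next
    case (Suc s)
    define k where "k = Suc s"
    have sn: "Suc s < n" using Suc.prems .
    have kn: "1 \<le> k" "k < n" "k \<in> {1..n}" using sn by (auto simp: k_def)
    have IH: "g s C1 = g s C2" using Suc.IH sn by simp
    have H: "\<forall>y<C2. hC C2 s y = p k"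
      unfolding k_def using strict_apply[OF C2(1) sn C12 order.refl] IH by (simp add: g_def)
    have PC: "Props C2 k" using Props_all[OF C2(1) kn(2)] .
    have aC: "aC C2 k = C2"
    proof (rule ccontr)
      assume "aC C2 k \<noteq> C2"
      then have alt: "aC C2 k < C2" using a_facts(2)[OF C2(1) kn(1,2) PC] by simp
      have a0: "0 \<le> aC C2 k" using a_facts(1)[OF C2(1) kn(1,2) PC] .
      define y1 where "y1 = aC C2 k + (C2 - aC C2 k) / 3"
      define y2 where "y2 = aC C2 k + 2 * (C2 - aC C2 k) / 3"
      have yy: "aC C2 k < y1" "y1 < y2" "y2 < C2" "0 < y1" using alt a0 by (auto simp: y1_def y2_def field_simps)
      have gk: "g k y = p k" if "aC C2 k < y" "y < C2" for y
        using H that unfolding hC_def k_def[symmetric] g_def by auto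
      show False
      proof (cases "Suc k < n")
        case True
        have "\<forall>y<y2. hC C2 k y = p (Suc k)"
          by (rule strict_apply[OF C2(1) True yy(2) less_imp_le[OF yy(3)]])
            (use gk[of y1] gk[of y2] yy in \<open>simp add: g_def\<close>)
        then have "g k y1 = p (Suc k)" unfolding g_def by (rule g_at_p[OF C2(1) True yy(2)])
        moreover have "p k \<noteq> p (Suc k)" using padj[rule_format, OF kn(3)] nxt_lt[OF kn(2)] by simp
        ultimately show False using gk[of y1] yy by simp
      next
        case False
        then have "k = n - 1" using kn by simp
        then have "g k y1 = p n" unfolding g_def using g_last[of C2 y1] by simp
        moreover have "p k \<noteq> p n" using padj[rule_format, OF kn(3)] nxt_lt[OF kn(2)] \<open>k = n - 1\<close> n2 by simp
        ultimately show False using gk[of y1] yy by simp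
      qed
    qed
    have a4: "p k < p (Suc k) \<and> (\<forall>y. 0 \<le> y \<longrightarrow> y < C2 \<longrightarrow> g k y \<noteq> p k)"
      using a_facts(4)[OF C2(1) kn(1,2) PC aC C2(2)] unfolding g_def .
    have gk0: "g k 0 = p (Suc k)" using Props_facts(2)[OF C2(1) kn(2), of 0] by (simp add: g_def)
    have gcont: "continuous_on {0..C1} (g k)"
      using Props_facts(1)[OF C2(1) kn(2)] unfolding g_def by (rule continuous_on_subset) auto
    have gC1: "p k < g k C1"
    proof (rule ccontr)
      assume "\<not> p k < g k C1"
      then obtain y where "0 \<le> y" "y \<le> C1" "g k y = p k"
        using IVT2'[of "g k" C1 "p k" 0] gcont C1 gk0 a4 by force
      then show False using a4 C12 by auto
    qed
    have st: "start_idx n k = k" using kn by (simp add: start_idx_def)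
    have "max 0 (g k C1 - p k) = max 0 (g k C2 - p k)"
      using Teq[OF kn(3)] unfolding T_def st g_def .
    then have "g k C1 = g k C2" using gC1 by (simp add: max_def split: if_splits)
    then show ?case using gC1 unfolding k_def by simp
  qed
  have n1: "n - 1 < n" "0 < n - 1" using n2 by auto
  have "p (n - 1) < g (n - 1) C2" using Q[OF n1(1)] n1(2) by simp
  moreover have "g (n - 1) C2 = p n" unfolding g_def by (rule g_last)
  moreover have "p n \<le> p (n - 1)" using pn_le[of "n - 1"] n2 by auto
  ultimately show False by simp
qed

end

context tou begin

lemma G_tail:
  assumes s: "s < n"
  shows "\<forall>\<epsilon>>0. \<exists>C0\<ge>0. \<forall>C\<ge>C0. gC C s C \<le> p n + \<epsilon>"
proof -
  have "s \<le> n - 1" using s by simp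
  then show ?thesis
  proof (induction s rule: inc_induct)
    case base
    show ?case using g_last by (intro allI impI exI[of _ 0]) auto
  next
    case (step s)
    define k where "k = Suc s"
    have sn: "Suc s < n" using step by simp
    have kn: "1 \<le> k" "k < n" "k \<in> {1..n}" using sn by (auto simp: k_def)
    show ?case
    proof (intro allI impI)
      fix \<epsilon> :: real assume e: "0 < \<epsilon>"
      define e' where "e' = \<epsilon> / 2"
      have e': "0 < e'" using e by (simp add: e'_def)
      obtain C0 where C0: "0 \<le> C0" "\<forall>C\<ge>C0. gC C k C \<le> p n + e'"
        using step.IH e' unfolding k_def by blast
      have gk: "gC C k y \<le> p n + e'" if "C0 \<le> y" "y \<le> C" for C y
      proof -
        have "gC C k y = gC y k y" using G_cross[of y C k] that C0 kn by simp
        then show ?thesis using C0 that by simp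
      qed
      have hbound: "hC C s y \<le> p n + e'" if "C0 \<le> C" "C0 < y" "y \<le> C" for C y
      proof (cases "y \<le> aC C k")
        case False
        then show ?thesis unfolding hC_def k_def[symmetric] using gk[of y C] that by simp
      next
        case True
        have C: "0 \<le> C" using that C0 by simp
        have "p k \<le> p n + e'"
        proof (rule ccontr)
          assume pk: "\<not> p k \<le> p n + e'"
          have "aC C k \<le> C0"
          proof (cases "p (Suc k) \<le> p k")
            case True
            then show ?thesis using a_facts2(1)[OF C kn(1,2)] C0 by simp
          next
            case False
            have gk0: "gC C k 0 = p (Suc k)" using Props_facts(2)[OF C kn(2), of 0] by simp
            have gkC0: "gC C k C0 \<le> p n + e'" using gk[of C0 C] that by simp
            have gcont: "continuous_on {0..C0} (gC C k)"
              using Props_facts(1)[OF C kn(2)] by (rule continuous_on_subset) auto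
            obtain y0 where "0 \<le> y0" "y0 \<le> C0" "gC C k y0 = p k"
              using IVT2'[of "gC C k" C0 "p k" 0] gcont C0 gk0 gkC0 pk False by force
            then show ?thesis using a_facts2(2)[OF C kn(1,2), of y0] that by simp
          qed
          then show False using True that by simp
        qed
        then show ?thesis unfolding hC_def k_def[symmetric] using True by simp
      qed
      interpret MU: prob_space "mu k" using mu_prob[OF kn(3)] .
      have m1: "measure (mu k) UNIV = 1" using MU.prob_space by simp
      define E where "E = (\<integral>x. \<bar>x\<bar> \<partial>mu k)"
      define K where "K = Pmax - p n"
      have K0: "0 \<le> K" using p_le_Pmax[of n] pn_le[of n] n2 unfolding K_def
        by (metis atLeastAtMost_iff diff_ge_0_iff_ge le_numeral_extra(4) le_trans numeral_le_one_iff one_le_numeral order_refl semiring_norm(69)) 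
      have E0: "0 \<le> E" unfolding E_def by simp
      have intabs: "integrable (mu k) (\<lambda>x. \<bar>x\<bar>)" using mu_integrable[OF kn(3)] by (rule integrable_abs)
      define C1 where "C1 = C0 + 1 + K * E / e'"
      show "\<exists>C0\<ge>0. \<forall>C\<ge>C0. gC C s C \<le> p n + \<epsilon>"
      proof (intro exI[of _ C1] conjI allI impI)
        show "0 \<le> C1" unfolding C1_def using C0 K0 E0 e' by simp
        fix C assume CC1: "C1 \<le> C"
        define t where "t = C - C0"
        have KEe: "0 \<le> K * E / e'" using K0 E0 e' by simp
        have t: "1 + K * E / e' \<le> t" "0 < t" using CC1 KEe unfolding C1_def t_def by linarith+
        have C: "0 \<le> C" "C0 \<le> C" using t C0 by (auto simp: t_def)
        have hm[measurable]: "hC C s \<in> borel_measurable borel" using h_facts(5)[OF C(1) sn] .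
        have sI: "{x. t \<le> x} \<in> sets (mu k)" by simp
        have fI: "emeasure (mu k) {x. t \<le> x} < \<infinity>" by (simp add: MU.emeasure_eq_measure)
        have intI: "integrable (mu k) (\<lambda>x. K * indicator {x. t \<le> x} x)"
          by (intro integrable_mult_right integrable_real_indicator sI fI)
        have int1: "integrable (mu k) (\<lambda>x. (p n + e') + K * indicator {x. t \<le> x} x)"
          by (intro Bochner_Integration.integrable_add MU.integrable_const intI)
        have int2: "integrable (mu k) (\<lambda>x. hC C s (C - x))"
          by (rule MU.integrable_const_bound[where B="\<bar>p n\<bar> + \<bar>Pmax\<bar>"]) (use h_facts(3)[OF C(1) sn] in auto)
        have Mk: "measure (mu k) {x. t \<le> x} \<le> E / t"
        proof -
          have "measure (mu k) {x. t \<le> x} \<le> measure (mu k) {x \<in> space (mu k). t \<le> \<bar>x\<bar>}"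
            by (intro MU.finite_measure_mono) auto
          also have "\<dots> \<le> (\<integral>x. \<bar>x\<bar> \<partial>mu k) / t"
            by (rule integral_Markov_inequality_measure[OF intabs]) (use t in auto)
          finally show ?thesis unfolding E_def .
        qed
        have KE: "K * (E / t) \<le> e'"
        proof -
          have "K * E / e' \<le> t" using t by simp
          then have "K * E \<le> e' * t" using e' by (simp add: divide_le_eq mult.commute)
          then show ?thesis using t by (simp add: divide_le_eq mult.commute)
        qed
        have "gC C s C = (\<integral>x. hC C s (C - x) \<partial>mu k)" using grep_all[OF C(1) sn] k_def by simp
        also have "\<dots> \<le> (\<integral>x. (p n + e') + K * indicator {x. t \<le> x} x \<partial>mu k)"
        proof (rule integral_mono_AE[OF int2 int1])
          show "AE x in mu k. hC C s (C - x) \<le> (p n + e') + K * indicator {x. t \<le> x} x"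
            using mu_pos[OF kn(3)]
          proof eventually_elim
            fix x :: real assume x: "0 < x"
            show "hC C s (C - x) \<le> (p n + e') + K * indicator {x. t \<le> x} x"
            proof (cases "t \<le> x")
              case True
              then show ?thesis using h_facts(4)[OF C(1) sn, of "C - x"] e' by (simp add: K_def)
            next
              case False
              then have "C0 < C - x" "C - x \<le> C" using x by (auto simp: t_def)
              then show ?thesis using hbound[of C "C - x"] C False by simp
            qed
          qed
        qed
        also have "\<dots> = (p n + e') + K * measure (mu k) {x. t \<le> x}"
          by (subst Bochner_Integration.integral_add[OF MU.integrable_const intI]) (simp add: m1 sI fI)
        also have "\<dots> \<le> (p n + e') + K * (E / t)"
          by (rule add_left_mono[OF mult_left_mono[OF Mk K0]])
        also have "\<dots> \<le> p n + \<epsilon>" using KE unfolding e'_def by linarith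
        finally show "gC C s C \<le> p n + \<epsilon>" .
      qed
    qed
  qed
qed

end

context tou begin

lemma Sfun_small:
  assumes e: "0 < e"
  shows "\<exists>B\<ge>0. Sfun B \<le> e"
proof -
  define \<epsilon> where "\<epsilon> = e / real n"
  have n0: "0 < real n" using n2 by simp
  have eps: "0 < \<epsilon>" using e n0 by (simp add: \<epsilon>_def)
  have "\<forall>s. \<exists>c. s < n \<longrightarrow> 0 \<le> c \<and> (\<forall>C\<ge>c. gC C s C \<le> p n + \<epsilon>)"
    using G_tail eps by blast
  then obtain F where F: "\<And>s. s < n \<Longrightarrow> 0 \<le> F s \<and> (\<forall>C\<ge>F s. gC C s C \<le> p n + \<epsilon>)"
    by metis
  define B where "B = Max (F ` {..<n})"
  have FB: "F s \<le> B" if "s < n" for s unfolding B_def using that by (intro Max_ge) auto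
  have B0: "0 \<le> B" using FB[of 0] F[of 0] n2 by force
  have "Sfun B \<le> (\<Sum>i=1..n. \<epsilon>)"
    unfolding Sfun_def
  proof (intro sum_mono)
    fix i assume i: "i \<in> {1..n}"
    have "gC B (start_idx n i) B \<le> p n + \<epsilon>"
      using F[OF start_idx_lt[OF i]] FB[OF start_idx_lt[OF i]] by auto
    moreover have "p n \<le> p i" using pn_le[OF i] .
    ultimately show "max 0 (gC B (start_idx n i) B - p i) \<le> \<epsilon>" using eps by simp
  qed
  also have "\<dots> = e" using n0 by (simp add: \<epsilon>_def)
  finally show ?thesis using B0 by blast
qed

lemma main:
  assumes ps: "0 < ps"
  shows "(\<exists>!C. C \<ge> 0 \<and> ps = (\<Sum>i=1..n. MR P X p n C i)) \<longleftrightarrow> ps \<le> pi_max p n"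
proof -
  have eq: "(C \<ge> 0 \<and> ps = (\<Sum>i=1..n. MR P X p n C i)) \<longleftrightarrow> (C \<ge> 0 \<and> ps = Sfun C)" for C
    using sum_MR by auto
  show ?thesis unfolding eq
  proof
    assume "\<exists>!C. 0 \<le> C \<and> ps = Sfun C"
    then obtain C where C: "0 \<le> C" "ps = Sfun C" by auto
    then show "ps \<le> pi_max p n" using Sfun_antimono[of 0 C] Sfun0 by simp
  next
    assume le: "ps \<le> pi_max p n"
    obtain B where B: "0 \<le> B" "Sfun B \<le> ps" using Sfun_small[OF ps] by blast
    obtain C where C: "0 \<le> C" "C \<le> B" "Sfun C = ps"
      using IVT2'[of Sfun B ps 0] B le Sfun0 Sfun_cont[OF B(1)] by auto
    show "\<exists>!C. 0 \<le> C \<and> ps = Sfun C"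
    proof (rule ex1I[of _ C])
      show "0 \<le> C \<and> ps = Sfun C" using C by simp
      fix C' assume C': "0 \<le> C' \<and> ps = Sfun C'"
      show "C' = C"
      proof (rule ccontr)
        assume "C' \<noteq> C"
        then consider "C' < C" | "C < C'" by linarith
        then show False
        proof cases
          case 1 then show False using Sfun_strict[of C' C] C C' by simp
        next
          case 2 then show False using Sfun_strict[of C C'] C C' by simp
        qed
      qed
    qed
  qed
qed

end

theorem corollary1:
  fixes P :: "'a measure" and X :: "nat \<Rightarrow> 'a \<Rightarrow> real" and f :: "nat \<Rightarrow> real \<Rightarrow> real"
    and p :: "nat \<Rightarrow> real" and n :: nat and p_s :: real
  assumes "prob_space P"
    and "n \<ge> 2"
    and "\<forall>k\<in>{1..n}. p n \<le> p k"
    and "\<forall>k\<in>{1..n}. p k \<noteq> p (nxt n k)"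
    and "prob_space.indep_vars P (\<lambda>_. borel) X {1..n}"
    and "\<forall>k\<in>{1..n}. distributed P lborel (X k) (\<lambda>x. ennreal (f k x))"
    and "\<forall>k\<in>{1..n}. \<forall>x. f k x \<ge> 0 \<and> (f k x > 0 \<longleftrightarrow> x \<ge> 0)"
    and "\<forall>k\<in>{1..n}. \<exists>f'. continuous_on {0..} f' \<and>
           (\<forall>x\<ge>0. (f k has_real_derivative f' x) (at x within {0..}))"
    and "\<forall>k\<in>{1..n}. integrable P (X k)"
    and "p_s > 0"
  shows "(\<exists>!C. C \<ge> 0 \<and> p_s = (\<Sum>i=1..n. MR P X p n C i)) \<longleftrightarrow> p_s \<le> pi_max p n"
proof -
  interpret T: tou P X f p n
    by (intro tou.intro tou_axioms.intro) (use assms in auto)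
  show ?thesis by (rule T.main) (use assms in auto)
qed

end
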